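(* With the notation of the context, if $B\subseteq H$ is a set that is non-meager with respect to $\tau$ and has the Baire property with respect to $\tau$, then for every $m\in\omega$ there are distinct $x,y\in P_m$ such that $(B+x)\cap(B+y)\neq\emptyset$.
   Context: Work in $2^\omega$ with coordinatewise addition mod 2 (also used for finite 0-1 sequences of equal domain). Fix integers $0=n_0<n_1<n_2<\cdots$ and sets $C_i\subseteq 2^{[n_i,n_{i+1})}$ such that for every $i$ and all $s_0,\ldots,s_{n_i}\in 2^{[n_i,n_{i+1})}$ both $\bigcap_{k\le n_i}(C_i+s_k)$ and $\bigcap_{k\le n_i}((2^{[n_i,n_{i+1})}\setminus C_i)+s_k)$ are nonempty. Let $H=\{x\in 2^\omega: x\restriction[n_i,n_{i+1})\in C_i \text{ for all } i\}$. Fix a sequence $\langle P_m:m\in\omega\rangle$ of nonempty perfect subsets of $2^\omega$; let $P_m^*=\{x+y:x,y\in P_m\}$ and $T_m^*=\{x\restriction k: x\in P_m^*, k\in\omega\}$. A tree mapping with domain $n\ge1$ is a partial function $\pi$ from $\{(k,\ell):k<\ell<n\}$ to $\omega$ such that for every $0<\ell<n$ there is exactly one $k<\ell$ with $\pi(k,\ell)$ defined. A finite sequence $s$ is acceptable if ${\rm dom}(s)=n_i$ for some $i$ and $s\restriction[n_j,n_{j+1})\in C_j$ for all $j<i$. $S$ is the set of all $\rho=\langle\pi,s_0,\ldots,s_{n-1}\rangle$ where $n=n(\rho)\ge1$, $\pi$ is a tree mapping with domain $n$, the $s_j$ are acceptable with a common domain $n_i$ with $n_i\ge n$ (put $i(\rho)=i$),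 and $s_k+s_\ell\in T^*_{\pi(k,\ell)}$ whenever $\pi(k,\ell)$ is defined. For $\rho=\langle\pi,s_0,\ldots,s_{n-1}\rangle\in S$, $U(\rho)$ is the set of $x_0\in H$ for which there are $x_1,\ldots,x_{n-1}\in H$ with each $s_j$ an initial segment of $x_j$ and $\langle\pi,x_0\restriction n_j,\ldots,x_{n-1}\restriction n_j\rangle\in S$ for all $j>i(\rho)$. The sets $U(\rho)$, $\rho\in S$, form a basis of a topology $\tau$ on $H$. For $B\subseteq 2^\omega$ and $x\in2^\omega$, $B+x=\{b+x:b\in B\}$. *)

theory Defs
  imports "HOL-Analysis.Analysis"
begin

text \<open>Elements of 2^omega are functions nat => bool. A finite 0-1 sequence with
domain D is represented as a function nat => bool that is False outside D.\<close>

definition fs :: "nat set \<Rightarrow> (nat \<Rightarrow> bool) set" where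
  "fs D = {s. \<forall>k. k \<notin> D \<longrightarrow> \<not> s k}"

definition restr :: "(nat \<Rightarrow> bool) \<Rightarrow> nat set \<Rightarrow> (nat \<Rightarrow> bool)" where
  "restr x D = (\<lambda>k. if k \<in> D then x k else False)"

text \<open>coordinatewise addition mod 2\<close>
definition sadd :: "(nat \<Rightarrow> bool) \<Rightarrow> (nat \<Rightarrow> bool) \<Rightarrow> (nat \<Rightarrow> bool)" where
  "sadd x y = (\<lambda>k. x k \<noteq> y k)"

definition translate :: "(nat \<Rightarrow> bool) set \<Rightarrow> (nat \<Rightarrow> bool) \<Rightarrow> (nat \<Rightarrow> bool) set" where
  "translate A x = (\<lambda>a. sadd a x) ` A"

definition block :: "(nat \<Rightarrow> nat) \<Rightarrow> nat \<Rightarrow> nat set" where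
  "block ns i = {ns i ..< ns (Suc i)}"

definition cantor_top :: "(nat \<Rightarrow> bool) topology" where
  "cantor_top = product_topology (\<lambda>_. discrete_topology (UNIV :: bool set)) UNIV"

definition perfect_in :: "'a topology \<Rightarrow> 'a set \<Rightarrow> bool" where
  "perfect_in X S \<longleftrightarrow> X derived_set_of S = S"

definition Hset :: "(nat \<Rightarrow> nat) \<Rightarrow> (nat \<Rightarrow> (nat \<Rightarrow> bool) set) \<Rightarrow> (nat \<Rightarrow> bool) set" where
  "Hset ns C = {x. \<forall>i. restr x (block ns i) \<in> C i}"

definition Pstar :: "(nat \<Rightarrow> (nat \<Rightarrow> bool) set) \<Rightarrow> nat \<Rightarrow> (nat \<Rightarrow> bool) set" where
  "Pstar P m = {sadd x y | x y. x \<in> P m \<and> y \<in> P m}"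

definition in_Tstar :: "(nat \<Rightarrow> (nat \<Rightarrow> bool) set) \<Rightarrow> nat \<Rightarrow> nat \<Rightarrow> (nat \<Rightarrow> bool) \<Rightarrow> bool" where
  "in_Tstar P m d t \<longleftrightarrow> (\<exists>x \<in> Pstar P m. restr x {..<d} = t)"

definition tree_mapping :: "(nat \<times> nat \<Rightarrow> nat option) \<Rightarrow> nat \<Rightarrow> bool" where
  "tree_mapping \<pi> N \<longleftrightarrow> 1 \<le> N \<and>
     (\<forall>k l. \<pi> (k, l) \<noteq> None \<longrightarrow> k < l \<and> l < N) \<and>
     (\<forall>l. 0 < l \<and> l < N \<longrightarrow> (\<exists>!k. k < l \<and> \<pi> (k, l) \<noteq> None))"

definition acceptable :: "(nat \<Rightarrow> nat) \<Rightarrow> (nat \<Rightarrow> (nat \<Rightarrow> bool) set) \<Rightarrow> nat \<Rightarrow> (nat \<Rightarrow> bool) \<Rightarrow> bool" where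
  "acceptable ns C i s \<longleftrightarrow> s \<in> fs {..<ns i} \<and> (\<forall>j<i. restr s (block ns j) \<in> C j)"

text \<open>rho = (pi, N, i, s) stands for <pi, s 0, ..., s (N-1)> with common domain ns i;
  s j is the all-False sequence for j >= N.\<close>
type_synonym rho = "(nat \<times> nat \<Rightarrow> nat option) \<times> nat \<times> nat \<times> (nat \<Rightarrow> nat \<Rightarrow> bool)"

definition Sset :: "(nat \<Rightarrow> nat) \<Rightarrow> (nat \<Rightarrow> (nat \<Rightarrow> bool) set) \<Rightarrow> (nat \<Rightarrow> (nat \<Rightarrow> bool) set) \<Rightarrow> rho set" where
  "Sset ns C P = {(\<pi>, N, i, s). tree_mapping \<pi> N \<and> N \<le> ns i \<and>
      (\<forall>j<N. acceptable ns C i (s j)) \<and> (\<forall>j\<ge>N. s j = (\<lambda>_. False)) \<and>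
      (\<forall>k l m. \<pi> (k, l) = Some m \<longrightarrow> in_Tstar P m (ns i) (sadd (s k) (s l)))}"

definition Uset :: "(nat \<Rightarrow> nat) \<Rightarrow> (nat \<Rightarrow> (nat \<Rightarrow> bool) set) \<Rightarrow> (nat \<Rightarrow> (nat \<Rightarrow> bool) set) \<Rightarrow> rho \<Rightarrow> (nat \<Rightarrow> bool) set" where
  "Uset ns C P \<rho> = (case \<rho> of (\<pi>, N, i, s) \<Rightarrow>
     {x0 \<in> Hset ns C. \<exists>xs. xs 0 = x0 \<and>
        (\<forall>j<N. xs j \<in> Hset ns C \<and> restr (xs j) {..<ns i} = s j) \<and>
        (\<forall>j\<ge>N. xs j = (\<lambda>_. False)) \<and>
        (\<forall>j>i. (\<pi>, N, j, (\<lambda>l. restr (xs l) {..<ns j})) \<in> Sset ns C P)})"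

definition tau :: "(nat \<Rightarrow> nat) \<Rightarrow> (nat \<Rightarrow> (nat \<Rightarrow> bool) set) \<Rightarrow> (nat \<Rightarrow> (nat \<Rightarrow> bool) set) \<Rightarrow> (nat \<Rightarrow> bool) topology" where
  "tau ns C P = topology_generated_by (Uset ns C P ` Sset ns C P)"

definition nowhere_dense_in :: "'a topology \<Rightarrow> 'a set \<Rightarrow> bool" where
  "nowhere_dense_in X A \<longleftrightarrow> A \<subseteq> topspace X \<and> X interior_of (X closure_of A) = {}"

definition meager_in :: "'a topology \<Rightarrow> 'a set \<Rightarrow> bool" where
  "meager_in X A \<longleftrightarrow> (\<exists>F. countable F \<and> (\<forall>N\<in>F. nowhere_dense_in X N) \<and> A \<subseteq> \<Union>F)"

definition baire_property_in :: "'a topology \<Rightarrow> 'a set \<Rightarrow> bool" where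
  "baire_property_in X A \<longleftrightarrow> (\<exists>V. openin X V \<and> meager_in X ((A - V) \<union> (V - A)))"

end

theory Submission
  imports Defs
begin


lemma restr_restr: "restr (restr x A) B = restr x (A \<inter> B)"
  by (auto simp: restr_def fun_eq_iff)

lemma sadd_restr: "sadd (restr x A) (restr y A) = restr (sadd x y) A"
  by (auto simp: restr_def sadd_def fun_eq_iff)

lemma in_Tstar_mono:
  assumes "in_Tstar P m d t" "d' \<le> d"
  shows "in_Tstar P m d' (restr t {..<d'})"
proof -
  from assms obtain x where "x \<in> Pstar P m" "restr x {..<d} = t" by (auto simp: in_Tstar_def)
  then have "restr x {..<d'} = restr t {..<d'}" using assms(2)
    unfolding restr_def fun_eq_iff by (metis lessThan_iff order_less_le_trans)
  then show ?thesis using \<open>x \<in> Pstar P m\<close> by (auto simp: in_Tstar_def)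
qed

definition good :: "(nat \<Rightarrow> nat) \<Rightarrow> (nat \<Rightarrow> (nat \<Rightarrow> bool) set) \<Rightarrow> (nat \<Rightarrow> (nat \<Rightarrow> bool) set)
   \<Rightarrow> (nat \<times> nat \<Rightarrow> nat option) \<Rightarrow> nat \<Rightarrow> (nat \<Rightarrow> nat \<Rightarrow> bool) \<Rightarrow> bool" where
  "good ns C P \<pi> N xs \<longleftrightarrow> tree_mapping \<pi> N \<and> (\<forall>j<N. xs j \<in> Hset ns C) \<and> (\<forall>j\<ge>N. xs j = (\<lambda>_. False))
     \<and> (\<forall>k l m d. \<pi> (k,l) = Some m \<longrightarrow> in_Tstar P m d (restr (sadd (xs k) (xs l)) {..<d}))"

lemma block_sub: "strict_mono ns \<Longrightarrow> j < i \<Longrightarrow> block ns j \<subseteq> {..<ns i}"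
  by (auto simp: block_def strict_mono_less_eq Suc_le_eq intro: order.strict_trans2)

lemma H_acceptable:
  assumes "strict_mono ns" "x \<in> Hset ns C"
  shows "acceptable ns C i (restr x {..<ns i})"
proof -
  have "restr (restr x {..<ns i}) (block ns j) = restr x (block ns j)" if "j < i" for j
    using block_sub[OF assms(1) that] by (auto simp: restr_restr Int_absorb1 inf.absorb2)
  then show ?thesis using assms(2) by (auto simp: acceptable_def fs_def restr_def Hset_def)
qed

lemma S_of_good:
  assumes "strict_mono ns" "good ns C P \<pi> N xs" "N \<le> ns i"
  shows "(\<pi>, N, i, \<lambda>j. restr (xs j) {..<ns i}) \<in> Sset ns C P"
proof -
  have "restr (xs j) {..<ns i} = (\<lambda>_. False)" if "j \<ge> N" for j
    using assms(2) that by (auto simp: good_def restr_def)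
  then show ?thesis using assms H_acceptable[OF assms(1)]
    by (auto simp: Sset_def good_def sadd_restr)
qed

lemma U_char:
  assumes "strict_mono ns" "(\<pi>, N, i, s) \<in> Sset ns C P"
  shows "x \<in> Uset ns C P (\<pi>, N, i, s) \<longleftrightarrow>
     (\<exists>xs. xs 0 = x \<and> good ns C P \<pi> N xs \<and> (\<forall>j<N. restr (xs j) {..<ns i} = s j))"
proof
  assume "x \<in> Uset ns C P (\<pi>, N, i, s)"
  then obtain xs where x: "x \<in> Hset ns C" "xs 0 = x" and xs: "\<forall>j<N. xs j \<in> Hset ns C \<and> restr (xs j) {..<ns i} = s j"
    "\<forall>j\<ge>N. xs j = (\<lambda>_. False)" "\<forall>j>i. (\<pi>, N, j, (\<lambda>l. restr (xs l) {..<ns j})) \<in> Sset ns C P"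
    by (auto simp: Uset_def)
  have tm: "tree_mapping \<pi> N" using assms(2) by (auto simp: Sset_def)
  have "in_Tstar P m d (restr (sadd (xs k) (xs l)) {..<d})" if "\<pi> (k,l) = Some m" for k l m d
  proof -
    obtain j where j: "j > i" "d \<le> ns j"
      using strict_mono_imp_increasing[OF assms(1), of "Suc (i + d)"] by (intro that[of "Suc (i+d)"]) auto
    have "in_Tstar P m (ns j) (sadd (restr (xs k) {..<ns j}) (restr (xs l) {..<ns j}))"
      using xs(3) j that by (auto simp: Sset_def)
    then have "in_Tstar P m d (restr (restr (sadd (xs k) (xs l)) {..<ns j}) {..<d})"
      using in_Tstar_mono j by (simp add: sadd_restr)
    then show ?thesis using j by (simp add: restr_restr Int_absorb2 inf.absorb2)
  qed
  then show "\<exists>xs. xs 0 = x \<and> good ns C P \<pi> N xs \<and> (\<forall>j<N. restr (xs j) {..<ns i} = s j)"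
    using x xs tm by (auto simp: good_def)
next
  assume "\<exists>xs. xs 0 = x \<and> good ns C P \<pi> N xs \<and> (\<forall>j<N. restr (xs j) {..<ns i} = s j)"
  then obtain xs where xs: "xs 0 = x" "good ns C P \<pi> N xs" "\<forall>j<N. restr (xs j) {..<ns i} = s j" by blast
  have N: "1 \<le> N" "N \<le> ns i" using assms(2) by (auto simp: Sset_def tree_mapping_def)
  have "(\<pi>, N, j, (\<lambda>l. restr (xs l) {..<ns j})) \<in> Sset ns C P" if "j > i" for j
    using S_of_good[OF assms(1) xs(2)] N strict_monoD[OF assms(1) that] by simp
  then show "x \<in> Uset ns C P (\<pi>, N, i, s)"
    using xs N unfolding Uset_def good_def by auto
qed



lemma tree_mapping_alt:
  "tree_mapping \<pi> N \<longleftrightarrow> 1 \<le> N \<and> (\<forall>k l. \<pi> (k,l) \<noteq> None \<longrightarrow> k < l \<and> l < N) \<and>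
     (\<forall>l. 0 < l \<and> l < N \<longrightarrow> (\<exists>k. \<pi> (k,l) \<noteq> None)) \<and>
     (\<forall>k k' l. \<pi> (k,l) \<noteq> None \<longrightarrow> \<pi> (k',l) \<noteq> None \<longrightarrow> k = k')"
proof
  assume A: "tree_mapping \<pi> N"
  have 1: "1 \<le> N" using A unfolding tree_mapping_def by (rule conjunct1)
  have 2: "\<forall>k l. \<pi> (k,l) \<noteq> None \<longrightarrow> k < l \<and> l < N"
    using A unfolding tree_mapping_def by (rule conjunct1[OF conjunct2])
  have 3: "\<forall>l. 0 < l \<and> l < N \<longrightarrow> (\<exists>!k. k < l \<and> \<pi> (k, l) \<noteq> None)"
    using A unfolding tree_mapping_def by (rule conjunct2[OF conjunct2])
  have U: "k = k'" if "\<pi> (k,l) \<noteq> None" "\<pi> (k',l) \<noteq> None" for k k' l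
  proof -
    have kl: "k < l" "k' < l" "l < N" using 2 that by auto
    then have "0 < l" by simp
    then have "\<exists>!k. k < l \<and> \<pi> (k, l) \<noteq> None" using 3 kl(3) by simp
    then obtain k0 where k0: "\<And>y. y < l \<and> \<pi> (y, l) \<noteq> None \<Longrightarrow> y = k0" unfolding Ex1_def by metis
    show ?thesis using k0[of k] k0[of k'] that kl by simp
  qed
  have E: "\<exists>k. \<pi> (k,l) \<noteq> None" if "0 < l" "l < N" for l
  proof -
    have "\<exists>!k. k < l \<and> \<pi> (k, l) \<noteq> None" using 3 that by simp
    then show ?thesis unfolding Ex1_def by metis
  qed
  show "1 \<le> N \<and> (\<forall>k l. \<pi> (k,l) \<noteq> None \<longrightarrow> k < l \<and> l < N) \<and>
     (\<forall>l. 0 < l \<and> l < N \<longrightarrow> (\<exists>k. \<pi> (k,l) \<noteq> None)) \<and>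
     (\<forall>k k' l. \<pi> (k,l) \<noteq> None \<longrightarrow> \<pi> (k',l) \<noteq> None \<longrightarrow> k = k')"
    using 1 2 E U by blast
next
  assume A: "1 \<le> N \<and> (\<forall>k l. \<pi> (k,l) \<noteq> None \<longrightarrow> k < l \<and> l < N) \<and>
     (\<forall>l. 0 < l \<and> l < N \<longrightarrow> (\<exists>k. \<pi> (k,l) \<noteq> None)) \<and>
     (\<forall>k k' l. \<pi> (k,l) \<noteq> None \<longrightarrow> \<pi> (k',l) \<noteq> None \<longrightarrow> k = k')"
  have A3: "\<forall>l. 0 < l \<and> l < N \<longrightarrow> (\<exists>k. \<pi> (k,l) \<noteq> None)" using A by (elim conjE)
  have A2: "\<forall>k l. \<pi> (k,l) \<noteq> None \<longrightarrow> k < l \<and> l < N" using A by (elim conjE)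
  have A4: "\<forall>k k' l. \<pi> (k,l) \<noteq> None \<longrightarrow> \<pi> (k',l) \<noteq> None \<longrightarrow> k = k'" using A by (elim conjE)
  have A1: "1 \<le> N" using A by (elim conjE)
  have X: "\<exists>!k. k < l \<and> \<pi> (k, l) \<noteq> None" if l: "0 < l" "l < N" for l
  proof -
    obtain k where k: "\<pi> (k,l) \<noteq> None" using A3 l by blast
    then have kl: "k < l" using A2 by blast
    have yk: "y = k" if "y < l \<and> \<pi> (y, l) \<noteq> None" for y using A4 that k by blast
    show ?thesis
    proof (rule ex1I[of _ k])
      show "k < l \<and> \<pi> (k, l) \<noteq> None" using k kl by simp
      show "\<And>y. y < l \<and> \<pi> (y, l) \<noteq> None \<Longrightarrow> y = k" by (rule yk)
    qed
  qed
  show "tree_mapping \<pi> N" unfolding tree_mapping_def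
  proof (intro conjI)
    show "1 \<le> N" by (rule A1)
    show "\<forall>k l. \<pi> (k,l) \<noteq> None \<longrightarrow> k < l \<and> l < N" by (rule A2)
    show "\<forall>l. 0 < l \<and> l < N \<longrightarrow> (\<exists>!k. k < l \<and> \<pi> (k, l) \<noteq> None)"
    proof (intro allI impI)
      fix l assume "0 < l \<and> l < N"
      then have "0 < l" "l < N" by simp_all
      then show "\<exists>!k. k < l \<and> \<pi> (k, l) \<noteq> None" by (rule X)
    qed
  qed
qed

definition sw :: "nat \<Rightarrow> nat" where "sw k = (if k = 0 then 1 else if k = 1 then 0 else k)"

definition swp :: "(nat \<times> nat \<Rightarrow> nat option) \<Rightarrow> (nat \<times> nat \<Rightarrow> nat option)" where
  "swp \<pi> = (\<lambda>(k,l). if k = 0 \<and> l = 1 then \<pi> (0,1) else if k = 1 \<and> l = 0 then \<pi> (1,0) else \<pi> (sw k, sw l))"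

lemma sw_sw[simp]: "sw (sw k) = k" by (simp add: sw_def)

lemma swp_swp[simp]: "swp (swp \<pi>) = \<pi>"
  by (auto simp: swp_def sw_def fun_eq_iff)

lemma swp_apply: "swp \<pi> (k,l) = (if k = 0 \<and> l = 1 then \<pi> (0,1) else if k = 1 \<and> l = 0 then \<pi> (1,0) else \<pi> (sw k, sw l))"
  by (simp add: swp_def)


lemma tree_swp:
  assumes "tree_mapping \<pi> N" "2 \<le> N" "\<pi> (0,1) \<noteq> None"
  shows "tree_mapping (swp \<pi>) N"
proof -
  note A = assms(1)[unfolded tree_mapping_alt]
  have sw_l: "swp \<pi> (k,l) = \<pi> (sw k, l)" if "2 \<le> l" for k l
    using that by (auto simp: swp_apply sw_def)
  have e: "k < l \<and> l < N" if "swp \<pi> (k,l) \<noteq> None" for k l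
  proof (cases "2 \<le> l")
    case True
    then have "\<pi> (sw k, l) \<noteq> None" using sw_l that by simp
    then have "sw k < l" "l < N" using A by blast+
    then show ?thesis using True by (auto simp: sw_def split: if_splits)
  next
    case False
    then consider "l = 0" | "l = 1" by linarith
    then show ?thesis
    proof cases
      case 1 then show ?thesis using that A by (auto simp: swp_apply sw_def split: if_splits)
    next
      case 2
      then have "k = 0 \<or> k = 1 \<or> k \<ge> 2" by linarith
      then show ?thesis using that A 2 assms(2) by (auto simp: swp_apply sw_def split: if_splits)
    qed
  qed
  have ex: "\<exists>k. swp \<pi> (k,l) \<noteq> None" if "0 < l" "l < N" for l
  proof (cases "l = 1")
    case True then show ?thesis using assms(3) by (auto simp: swp_apply)
  next
    case False
    have "\<exists>k. \<pi> (k,l) \<noteq> None" using A that by blast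
    then obtain k where "\<pi> (k,l) \<noteq> None" by blast
    then have "swp \<pi> (sw k, l) \<noteq> None" using False that
      by (auto simp: swp_apply sw_def)
    then show ?thesis by blast
  qed
  have un: "k = k'" if "swp \<pi> (k,l) \<noteq> None" "swp \<pi> (k',l) \<noteq> None" for k k' l
  proof -
    have kl: "k < l" "k' < l" using e that by auto
    show ?thesis
    proof (cases "2 \<le> l")
      case True
      then have "\<pi> (sw k, l) \<noteq> None" "\<pi> (sw k', l) \<noteq> None" using sw_l that by simp_all
      then have "sw k = sw k'" using A by blast
      then show ?thesis by (metis sw_sw)
    next
      case False
      then show ?thesis using kl by linarith
    qed
  qed
  show ?thesis unfolding tree_mapping_alt using e ex un assms(2) by auto
qed

lemma good_swp:
  assumes "good ns C P \<pi> N xs" "2 \<le> N" "\<pi> (0,1) \<noteq> None"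
  shows "good ns C P (swp \<pi>) N (xs \<circ> sw)"
proof -
  have tm: "tree_mapping \<pi> N" using assms by (simp add: good_def)
  have H: "\<forall>j<N. (xs \<circ> sw) j \<in> Hset ns C" using assms unfolding good_def sw_def by auto
  have Z: "\<forall>j\<ge>N. (xs \<circ> sw) j = (\<lambda>_. False)" using assms unfolding good_def sw_def by auto
  have sym: "sadd x y = sadd y x" for x y by (auto simp: sadd_def fun_eq_iff)
  have E: "in_Tstar P m d (restr (sadd ((xs \<circ> sw) k) ((xs \<circ> sw) l)) {..<d})"
    if "swp \<pi> (k,l) = Some m" for k l m d
  proof -
    consider "k = 0 \<and> l = 1" | "k = 1 \<and> l = 0" | "\<not>(k = 0 \<and> l = 1) \<and> \<not>(k = 1 \<and> l = 0)" by blast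
    then show ?thesis
    proof cases
      case 1
      then have "\<pi> (0,1) = Some m" using that by (simp add: swp_apply)
      then show ?thesis using assms(1) 1 by (auto simp: good_def sw_def sym)
    next
      case 2
      then show ?thesis using that tm by (auto simp: swp_apply tree_mapping_def)
    next
      case 3
      then have "\<pi> (sw k, sw l) = Some m" using that unfolding swp_apply by (auto split: if_splits)
      then show ?thesis using assms(1) by (auto simp: good_def)
    qed
  qed
  show ?thesis using tree_swp[OF tm assms(2,3)] H Z E by (auto simp: good_def)
qed

definition gi :: "nat \<Rightarrow> nat \<Rightarrow> nat" where "gi N k = (if k = 0 then 0 else k + 1 - N)"
definition gemb :: "nat \<Rightarrow> nat \<Rightarrow> nat" where "gemb N j = (if j = 0 then 0 else j + N - 1)"

definition glue :: "(nat \<times> nat \<Rightarrow> nat option) \<Rightarrow> nat \<Rightarrow> (nat \<times> nat \<Rightarrow> nat option) \<Rightarrow> nat \<Rightarrow> (nat \<times> nat \<Rightarrow> nat option)" where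
  "glue \<pi> N \<pi>2 N2 = (\<lambda>(k,l). if l < N then \<pi> (k,l) else if l < N + N2 - 1 \<and> (k = 0 \<or> N \<le> k) then \<pi>2 (gi N k, l + 1 - N) else None)"

definition gtup :: "nat \<Rightarrow> (nat \<Rightarrow> nat \<Rightarrow> bool) \<Rightarrow> (nat \<Rightarrow> nat \<Rightarrow> bool) \<Rightarrow> (nat \<Rightarrow> nat \<Rightarrow> bool)" where
  "gtup N xs ys = (\<lambda>j. if j < N then xs j else ys (j + 1 - N))"

lemma glue_apply: "glue \<pi> N \<pi>2 N2 (k,l) = (if l < N then \<pi> (k,l) else if l < N + N2 - 1 \<and> (k = 0 \<or> N \<le> k) then \<pi>2 (gi N k, l + 1 - N) else None)"
  by (simp add: glue_def)

lemma tree_glue: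
  assumes "tree_mapping \<pi> N" "tree_mapping \<pi>2 N2"
  shows "tree_mapping (glue \<pi> N \<pi>2 N2) (N + N2 - 1)"
proof -
  note A = assms(1)[unfolded tree_mapping_alt]
  note B = assms(2)[unfolded tree_mapping_alt]
  have e: "k < l \<and> l < N + N2 - 1" if "glue \<pi> N \<pi>2 N2 (k,l) \<noteq> None" for k l
  proof (cases "l < N")
    case True
    then have "\<pi> (k,l) \<noteq> None" using that by (simp add: glue_apply)
    then have "k < l" "l < N" using A by blast+
    moreover have "1 \<le> N2" using B by blast
    ultimately show ?thesis by linarith
  next
    case False
    then have "l < N + N2 - 1" "k = 0 \<or> N \<le> k" "\<pi>2 (gi N k, l + 1 - N) \<noteq> None"
      using that by (auto simp: glue_apply split: if_splits)
    then have "gi N k < l + 1 - N" using B by blast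
    then show ?thesis using \<open>l < N + N2 - 1\<close> \<open>k = 0 \<or> N \<le> k\<close> False A by (auto simp: gi_def split: if_splits)
  qed
  have ex: "\<exists>k. glue \<pi> N \<pi>2 N2 (k,l) \<noteq> None" if "0 < l" "l < N + N2 - 1" for l
  proof (cases "l < N")
    case True then show ?thesis using that A by (auto simp: glue_apply)
  next
    case False
    have "0 < l + 1 - N" "l + 1 - N < N2" using False that by auto
    then have "\<exists>k'. \<pi>2 (k', l + 1 - N) \<noteq> None" using B by blast
    then obtain k' where k': "\<pi>2 (k', l + 1 - N) \<noteq> None" by blast
    have "gi N (gemb N k') = k'" "gemb N k' = 0 \<or> N \<le> gemb N k'" using A by (auto simp: gi_def gemb_def)
    then have "glue \<pi> N \<pi>2 N2 (gemb N k', l) \<noteq> None" using False that k' by (auto simp: glue_apply)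
    then show ?thesis by blast
  qed
  have un: "k = k'" if "glue \<pi> N \<pi>2 N2 (k,l) \<noteq> None" "glue \<pi> N \<pi>2 N2 (k',l) \<noteq> None" for k k' l
  proof (cases "l < N")
    case True then show ?thesis using that A by (auto simp: glue_apply)
  next
    case False
    then have "k = 0 \<or> N \<le> k" "k' = 0 \<or> N \<le> k'" "\<pi>2 (gi N k, l + 1 - N) \<noteq> None" "\<pi>2 (gi N k', l + 1 - N) \<noteq> None"
      using that by (auto simp: glue_apply split: if_splits)
    then have "gi N k = gi N k'" using B by blast
    then show ?thesis using \<open>k = 0 \<or> N \<le> k\<close> \<open>k' = 0 \<or> N \<le> k'\<close> A by (auto simp: gi_def split: if_splits)
  qed
  show ?thesis unfolding tree_mapping_alt using e ex un A B by auto
qed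

lemma good_glue:
  assumes "good ns C P \<pi> N xs" "good ns C P \<pi>2 N2 ys" "xs 0 = ys 0"
  shows "good ns C P (glue \<pi> N \<pi>2 N2) (N + N2 - 1) (gtup N xs ys)"
proof -
  have tA: "tree_mapping \<pi> N" and tB: "tree_mapping \<pi>2 N2" using assms by (auto simp: good_def)
  have N1: "1 \<le> N" "1 \<le> N2" using tA tB by (auto simp: tree_mapping_def)
  have H: "\<forall>j<N + N2 - 1. gtup N xs ys j \<in> Hset ns C" using assms(1,2) N1 unfolding good_def gtup_def by auto
  have Z: "\<forall>j\<ge>N + N2 - 1. gtup N xs ys j = (\<lambda>_. False)" using assms(1,2) N1 unfolding good_def gtup_def by auto
  have E: "in_Tstar P m d (restr (sadd (gtup N xs ys k) (gtup N xs ys l)) {..<d})"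
    if "glue \<pi> N \<pi>2 N2 (k,l) = Some m" for k l m d
  proof (cases "l < N")
    case True
    then have "\<pi> (k,l) = Some m" using that by (simp add: glue_apply)
    moreover have "k < l" using calculation tA by (auto simp: tree_mapping_def)
    ultimately show ?thesis using assms(1) True by (auto simp: good_def gtup_def)
  next
    case False
    then have "k = 0 \<or> N \<le> k" "\<pi>2 (gi N k, l + 1 - N) = Some m"
      using that by (auto simp: glue_apply split: if_splits)
    moreover have "gtup N xs ys k = ys (gi N k)" "gtup N xs ys l = ys (l + 1 - N)"
      using calculation(1) False N1 assms(3) by (auto simp: gtup_def gi_def)
    ultimately show ?thesis using assms(2) by (auto simp: good_def)
  qed
  show ?thesis using tree_glue[OF tA tB] H Z E by (auto simp: good_def)
qed

lemma good_glue_split1: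
  assumes "good ns C P (glue \<pi> N \<pi>2 N2) (N + N2 - 1) ts" "tree_mapping \<pi> N" "tree_mapping \<pi>2 N2"
  shows "good ns C P \<pi> N (\<lambda>j. if j < N then ts j else (\<lambda>_. False))"
proof -
  have E: "in_Tstar P m d (restr (sadd (ts k) (ts l)) {..<d})" if "\<pi> (k,l) = Some m" for k l m d
  proof -
    have "k < l" "l < N" using that assms(2) by (auto simp: tree_mapping_def)
    then have "glue \<pi> N \<pi>2 N2 (k,l) = Some m" using that by (simp add: glue_apply)
    then show ?thesis using assms(1) by (auto simp: good_def)
  qed
  have kl: "k < l \<and> l < N" if "\<pi> (k,l) = Some m" for k l m using that assms(2) by (auto simp: tree_mapping_def)
  have N1: "1 \<le> N2" using assms(3) by (auto simp: tree_mapping_def)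
  have H: "\<forall>j<N. ts j \<in> Hset ns C" using assms(1) N1 by (auto simp: good_def)
  have E2: "in_Tstar P m d (restr (sadd ((\<lambda>j. if j < N then ts j else (\<lambda>_. False)) k) ((\<lambda>j. if j < N then ts j else (\<lambda>_. False)) l)) {..<d})"
    if "\<pi> (k,l) = Some m" for k l m d using kl[OF that] E[OF that] by simp
  show ?thesis using assms(2) H E2 unfolding good_def by auto
qed

lemma good_glue_split2:
  assumes "good ns C P (glue \<pi> N \<pi>2 N2) (N + N2 - 1) ts" "tree_mapping \<pi> N" "tree_mapping \<pi>2 N2"
  shows "good ns C P \<pi>2 N2 (\<lambda>j. if j < N2 then ts (gemb N j) else (\<lambda>_. False))"
proof -
  have N1: "1 \<le> N" "1 \<le> N2" using assms by (auto simp: tree_mapping_def)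
  have E: "in_Tstar P m d (restr (sadd (ts (gemb N k)) (ts (gemb N l))) {..<d})" if "\<pi>2 (k,l) = Some m" for k l m d
  proof -
    have "k < l" "l < N2" using that assms(3) by (auto simp: tree_mapping_def)
    then have "glue \<pi> N \<pi>2 N2 (gemb N k, gemb N l) = Some m" using that N1 by (auto simp: glue_apply gemb_def gi_def)
    then show ?thesis using assms(1) by (auto simp: good_def)
  qed
  have kl: "k < l \<and> l < N2" if "\<pi>2 (k,l) = Some m" for k l m using that assms(3) by (auto simp: tree_mapping_def)
  have H: "\<forall>j<N2. ts (gemb N j) \<in> Hset ns C" using assms(1) N1 by (auto simp: good_def gemb_def)
  let ?t = "\<lambda>j. if j < N2 then ts (gemb N j) else (\<lambda>_. False)"
  have E2: "in_Tstar P m d (restr (sadd (?t k) (?t l)) {..<d})"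
    if "\<pi>2 (k,l) = Some m" for k l m d using kl[OF that] E[OF that] by simp
  show ?thesis using assms(3) H E2 unfolding good_def by auto
qed



lemma restr_mono_eq:
  assumes "restr x {..<a} = restr y {..<a}" "b \<le> a"
  shows "restr x {..<b} = restr y {..<b}"
  using assms unfolding restr_def fun_eq_iff by (metis lessThan_iff order_less_le_trans)

lemma ns_ge: "strict_mono (ns::nat\<Rightarrow>nat) \<Longrightarrow> i \<le> ns i"
  by (erule strict_mono_imp_increasing)

lemma U_open: "\<rho> \<in> Sset ns C P \<Longrightarrow> openin (tau ns C P) (Uset ns C P \<rho>)"
  unfolding tau_def by (rule topology_generated_by_Basis) simp

lemma gtup_gemb: "xs 0 = ys 0 \<Longrightarrow> 1 \<le> N \<Longrightarrow> gtup N xs ys (gemb N j) = ys j"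
  by (auto simp: gtup_def gemb_def)

lemma gemb_less: "1 \<le> N \<Longrightarrow> j < N2 \<Longrightarrow> gemb N j < N + N2 - 1"
  by (auto simp: gemb_def)

lemma glue_U:
  assumes sm: "strict_mono ns" and s1: "(\<pi>1, N1, i1, s1) \<in> Sset ns C P" and s2: "(\<pi>2, N2, i2, s2) \<in> Sset ns C P"
    and y: "y \<in> Uset ns C P (\<pi>1, N1, i1, s1)" "y \<in> Uset ns C P (\<pi>2, N2, i2, s2)"
  shows "\<exists>\<sigma>\<in>Sset ns C P. y \<in> Uset ns C P \<sigma> \<and> Uset ns C P \<sigma> \<subseteq> Uset ns C P (\<pi>1, N1, i1, s1) \<inter> Uset ns C P (\<pi>2, N2, i2, s2)"
proof -
  obtain xs where xs: "xs 0 = y" "good ns C P \<pi>1 N1 xs" "\<forall>j<N1. restr (xs j) {..<ns i1} = s1 j"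
    using iffD1[OF U_char[OF sm s1] y(1)] by blast
  obtain zs where zs: "zs 0 = y" "good ns C P \<pi>2 N2 zs" "\<forall>j<N2. restr (zs j) {..<ns i2} = s2 j"
    using iffD1[OF U_char[OF sm s2] y(2)] by blast
  have t1: "tree_mapping \<pi>1 N1" and t2: "tree_mapping \<pi>2 N2" using xs zs by (auto simp: good_def)
  have N1: "1 \<le> N1" "1 \<le> N2" using t1 t2 by (auto simp: tree_mapping_def)
  define N where "N = N1 + N2 - 1"
  define i where "i = max i1 (max i2 N)"
  define ws where "ws = gtup N1 xs zs"
  have gw: "good ns C P (glue \<pi>1 N1 \<pi>2 N2) N ws" unfolding N_def ws_def
    using good_glue[OF xs(2) zs(2)] xs(1) zs(1) by simp
  have Ni: "N \<le> ns i" using ns_ge[OF sm, of i] by (simp add: i_def)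
  have i1: "ns i1 \<le> ns i" and i2: "ns i2 \<le> ns i" using sm by (auto simp: i_def strict_mono_less_eq)
  let ?\<sigma> = "(glue \<pi>1 N1 \<pi>2 N2, N, i, \<lambda>j. restr (ws j) {..<ns i})"
  have S: "?\<sigma> \<in> Sset ns C P" by (rule S_of_good[OF sm gw Ni])
  have w0: "ws 0 = y" using xs(1) N1 by (simp add: ws_def gtup_def)
  have yin: "y \<in> Uset ns C P ?\<sigma>" using gw w0 by (intro iffD2[OF U_char[OF sm S]] exI[of _ ws]) auto
  have sub: "t \<in> Uset ns C P (\<pi>1, N1, i1, s1) \<inter> Uset ns C P (\<pi>2, N2, i2, s2)" if tin: "t \<in> Uset ns C P ?\<sigma>" for t
  proof -
    obtain ts where ts: "ts 0 = t" "good ns C P (glue \<pi>1 N1 \<pi>2 N2) N ts" "\<forall>j<N. restr (ts j) {..<ns i} = restr (ws j) {..<ns i}"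
      using iffD1[OF U_char[OF sm S] tin] by blast
    have g1: "good ns C P \<pi>1 N1 (\<lambda>j. if j < N1 then ts j else (\<lambda>_. False))"
      using good_glue_split1[OF ts(2)[unfolded N_def] t1 t2] .
    have g2: "good ns C P \<pi>2 N2 (\<lambda>j. if j < N2 then ts (gemb N1 j) else (\<lambda>_. False))"
      using good_glue_split2[OF ts(2)[unfolded N_def] t1 t2] .
    have p1: "\<forall>j<N1. restr ((\<lambda>j. if j < N1 then ts j else (\<lambda>_. False)) j) {..<ns i1} = s1 j"
    proof (intro allI impI)
      fix j assume j: "j < N1"
      then have "j < N" using N1 by (simp add: N_def)
      then have "restr (ts j) {..<ns i1} = restr (ws j) {..<ns i1}" using ts(3) restr_mono_eq i1 by blast
      also have "ws j = xs j" using j by (simp add: ws_def gtup_def)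
      finally show "restr ((\<lambda>j. if j < N1 then ts j else (\<lambda>_. False)) j) {..<ns i1} = s1 j" using j xs(3) by simp
    qed
    have p2: "\<forall>j<N2. restr ((\<lambda>j. if j < N2 then ts (gemb N1 j) else (\<lambda>_. False)) j) {..<ns i2} = s2 j"
    proof (intro allI impI)
      fix j assume j: "j < N2"
      then have "gemb N1 j < N" using N1 gemb_less by (simp add: N_def)
      then have "restr (ts (gemb N1 j)) {..<ns i2} = restr (ws (gemb N1 j)) {..<ns i2}" using ts(3) restr_mono_eq i2 by blast
      also have "ws (gemb N1 j) = zs j" using gtup_gemb[of xs zs N1 j] xs(1) zs(1) N1 by (simp add: ws_def)
      finally show "restr ((\<lambda>j. if j < N2 then ts (gemb N1 j) else (\<lambda>_. False)) j) {..<ns i2} = s2 j" using j zs(3) by simp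
    qed
    have "t \<in> Uset ns C P (\<pi>1, N1, i1, s1)"
      using g1 p1 ts(1) N1 by (intro iffD2[OF U_char[OF sm s1]] exI[of _ "\<lambda>j. if j < N1 then ts j else (\<lambda>_. False)"]) auto
    moreover have "t \<in> Uset ns C P (\<pi>2, N2, i2, s2)"
      using g2 p2 ts(1) N1 by (intro iffD2[OF U_char[OF sm s2]] exI[of _ "\<lambda>j. if j < N2 then ts (gemb N1 j) else (\<lambda>_. False)"]) (auto simp: gemb_def)
    ultimately show ?thesis by blast
  qed
  show ?thesis using S yin sub by blast
qed

lemma basis_U:
  assumes sm: "strict_mono ns" and Ow: "openin (tau ns C P) Ow"
  shows "\<forall>y\<in>Ow. \<exists>\<sigma>\<in>Sset ns C P. y \<in> Uset ns C P \<sigma> \<and> Uset ns C P \<sigma> \<subseteq> Ow"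
proof -
  have "generate_topology_on (Uset ns C P ` Sset ns C P) Ow"
    using Ow unfolding tau_def by (simp add: openin_topology_generated_by_iff)
  then show ?thesis
  proof (induction rule: generate_topology_on.induct)
    case Empty then show ?case by simp
  next
    case (Int a b)
    show ?case
    proof
      fix y assume "y \<in> a \<inter> b"
      then obtain \<sigma>1 \<sigma>2 where s1: "\<sigma>1 \<in> Sset ns C P" "y \<in> Uset ns C P \<sigma>1" "Uset ns C P \<sigma>1 \<subseteq> a"
        and s2: "\<sigma>2 \<in> Sset ns C P" "y \<in> Uset ns C P \<sigma>2" "Uset ns C P \<sigma>2 \<subseteq> b"
        using Int.IH by blast
      obtain \<pi>1 N1 i1 r1 where e1: "\<sigma>1 = (\<pi>1, N1, i1, r1)" by (cases \<sigma>1) auto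
      obtain \<pi>2 N2 i2 r2 where e2: "\<sigma>2 = (\<pi>2, N2, i2, r2)" by (cases \<sigma>2) auto
      show "\<exists>\<sigma>\<in>Sset ns C P. y \<in> Uset ns C P \<sigma> \<and> Uset ns C P \<sigma> \<subseteq> a \<inter> b"
        using glue_U[OF sm s1(1)[unfolded e1] s2(1)[unfolded e2] s1(2)[unfolded e1] s2(2)[unfolded e2]]
          s1(3) s2(3) e1 e2 by blast
    qed
  next
    case (UN K)
    then show ?case by blast
  next
    case (Basis s)
    then show ?case by blast
  qed
qed

definition invs where
  "invs ns C P m \<pi> N i xs \<longleftrightarrow> good ns C P \<pi> N xs \<and> 2 \<le> N \<and> N \<le> ns i \<and> \<pi> (0,1) = Some m"

definition stepok where
  "stepok ns C P \<pi> N i xs \<pi>' N' i' xs' r F \<longleftrightarrow> N \<le> N' \<and> i < i' \<and> (\<forall>k l. l < N \<longrightarrow> \<pi>' (k,l) = \<pi> (k,l)) \<and>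
     (\<forall>j<N. restr (xs' j) {..<ns i} = restr (xs j) {..<ns i}) \<and>
     (\<forall>ts. good ns C P \<pi>' N' ts \<and> (\<forall>j<N'. restr (ts j) {..<ns i'} = restr (xs' j) {..<ns i'}) \<longrightarrow> ts r \<notin> F)"

lemma step0:
  assumes sm: "strict_mono ns" and inv: "invs ns C P m \<pi> N i xs" and F: "nowhere_dense_in (tau ns C P) F"
  shows "\<exists>\<pi>' N' i' xs'. invs ns C P m \<pi>' N' i' xs' \<and> stepok ns C P \<pi> N i xs \<pi>' N' i' xs' 0 F"
proof -
  let ?T = "tau ns C P"
  have g: "good ns C P \<pi> N xs" and N: "2 \<le> N" "N \<le> ns i" and m: "\<pi> (0,1) = Some m"
    using inv by (auto simp: invs_def)
  let ?\<rho> = "(\<pi>, N, i, \<lambda>j. restr (xs j) {..<ns i})"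
  have S: "?\<rho> \<in> Sset ns C P" by (rule S_of_good[OF sm g N(2)])
  have x0: "xs 0 \<in> Uset ns C P ?\<rho>" using g by (intro iffD2[OF U_char[OF sm S]] exI[of _ xs]) auto
  define G where "G = ?T closure_of F"
  define Ow where "Ow = Uset ns C P ?\<rho> - G"
  have Oo: "openin ?T Ow" unfolding Ow_def G_def
    by (intro openin_diff U_open[OF S] closedin_closure_of)
  have "Ow \<noteq> {}"
  proof
    assume "Ow = {}"
    then have "Uset ns C P ?\<rho> \<subseteq> G" by (auto simp: Ow_def)
    then have "Uset ns C P ?\<rho> \<subseteq> ?T interior_of G" by (rule interior_of_maximal[OF _ U_open[OF S]])
    then show False using F x0 by (auto simp: nowhere_dense_in_def G_def)
  qed
  then obtain y where y: "y \<in> Ow" by blast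
  obtain \<sigma> where \<sigma>: "\<sigma> \<in> Sset ns C P" "y \<in> Uset ns C P \<sigma>" "Uset ns C P \<sigma> \<subseteq> Ow"
    using basis_U[OF sm Oo] y by blast
  obtain \<pi>2 N2 i2 s2 where e: "\<sigma> = (\<pi>2, N2, i2, s2)" by (cases \<sigma>) auto
  note s2 = \<sigma>(1)[unfolded e]
  obtain ys where ys: "ys 0 = y" "good ns C P \<pi> N ys" "\<forall>j<N. restr (ys j) {..<ns i} = restr (xs j) {..<ns i}"
    using y iffD1[OF U_char[OF sm S]] by (auto simp: Ow_def)
  obtain zs where zs: "zs 0 = y" "good ns C P \<pi>2 N2 zs" "\<forall>j<N2. restr (zs j) {..<ns i2} = s2 j"
    using iffD1[OF U_char[OF sm s2] \<sigma>(2)[unfolded e]] by blast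
  have t1: "tree_mapping \<pi> N" and t2: "tree_mapping \<pi>2 N2" using g zs by (auto simp: good_def)
  have N2: "1 \<le> N2" using t2 by (auto simp: tree_mapping_def)
  define N' where "N' = N + N2 - 1"
  define i' where "i' = Suc (max i (max i2 N'))"
  define xs' where "xs' = gtup N ys zs"
  define \<pi>' where "\<pi>' = glue \<pi> N \<pi>2 N2"
  have gw: "good ns C P \<pi>' N' xs'" unfolding N'_def xs'_def \<pi>'_def
    using good_glue[OF ys(2) zs(2)] ys(1) zs(1) by simp
  have Ni: "N' \<le> ns i'" using ns_ge[OF sm, of i'] by (simp add: i'_def)
  have ii: "i < i'" by (simp add: i'_def)
  have i2: "ns i2 \<le> ns i'" using sm by (auto simp: i'_def strict_mono_less_eq)
  have inv': "invs ns C P m \<pi>' N' i' xs'"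
    using gw Ni N N2 m by (auto simp: invs_def N'_def \<pi>'_def glue_apply)
  have agree: "\<forall>k l. l < N \<longrightarrow> \<pi>' (k,l) = \<pi> (k,l)" by (simp add: \<pi>'_def glue_apply)
  have pre: "\<forall>j<N. restr (xs' j) {..<ns i} = restr (xs j) {..<ns i}" using ys(3) by (simp add: xs'_def gtup_def)
  have prp: "ts 0 \<notin> F" if ts: "good ns C P \<pi>' N' ts" "\<forall>j<N'. restr (ts j) {..<ns i'} = restr (xs' j) {..<ns i'}" for ts
  proof -
    have g2: "good ns C P \<pi>2 N2 (\<lambda>j. if j < N2 then ts (gemb N j) else (\<lambda>_. False))"
      using good_glue_split2[OF ts(1)[unfolded N'_def \<pi>'_def] t1 t2] .
    have N1: "1 \<le> N" using N by simp
    have p2: "\<forall>j<N2. restr ((\<lambda>j. if j < N2 then ts (gemb N j) else (\<lambda>_. False)) j) {..<ns i2} = s2 j"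
    proof (intro allI impI)
      fix j assume j: "j < N2"
      then have "gemb N j < N'" using N1 gemb_less by (simp add: N'_def)
      then have "restr (ts (gemb N j)) {..<ns i2} = restr (xs' (gemb N j)) {..<ns i2}" using ts(2) restr_mono_eq i2 by blast
      also have "xs' (gemb N j) = zs j" using gtup_gemb[of ys zs N j] ys(1) zs(1) N1 by (simp add: xs'_def)
      finally show "restr ((\<lambda>j. if j < N2 then ts (gemb N j) else (\<lambda>_. False)) j) {..<ns i2} = s2 j" using j zs(3) by simp
    qed
    have "ts 0 \<in> Uset ns C P \<sigma>"
      unfolding e using g2 p2 N2 by (intro iffD2[OF U_char[OF sm s2]] exI[of _ "\<lambda>j. if j < N2 then ts (gemb N j) else (\<lambda>_. False)"]) (auto simp: gemb_def)
    then have "ts 0 \<notin> G" using \<sigma>(3) by (auto simp: Ow_def)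
    moreover have "F \<subseteq> G" unfolding G_def using F by (intro closure_of_subset) (auto simp: nowhere_dense_in_def)
    ultimately show ?thesis by blast
  qed
  show ?thesis
    apply (rule exI[of _ \<pi>'], rule exI[of _ N'], rule exI[of _ i'], rule exI[of _ xs'])
    using inv' agree pre prp ii N2 by (auto simp: stepok_def N'_def)
qed

lemma step1:
  assumes sm: "strict_mono ns" and inv: "invs ns C P m \<pi> N i xs" and F: "nowhere_dense_in (tau ns C P) F"
  shows "\<exists>\<pi>' N' i' xs'. invs ns C P m \<pi>' N' i' xs' \<and> stepok ns C P \<pi> N i xs \<pi>' N' i' xs' 1 F"
proof -
  have g: "good ns C P \<pi> N xs" and N: "2 \<le> N" "N \<le> ns i" and m: "\<pi> (0,1) = Some m"
    using inv by (auto simp: invs_def)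
  have inv2: "invs ns C P m (swp \<pi>) N i (xs \<circ> sw)"
    using good_swp[OF g N(1)] m N by (auto simp: invs_def swp_apply)
  obtain \<pi>' N' i' xs' where r: "invs ns C P m \<pi>' N' i' xs'" "stepok ns C P (swp \<pi>) N i (xs \<circ> sw) \<pi>' N' i' xs' 0 F"
    using step0[OF sm inv2 F] by blast
  have g': "good ns C P \<pi>' N' xs'" and N': "2 \<le> N'" "N' \<le> ns i'" and m': "\<pi>' (0,1) = Some m"
    using r(1) by (auto simp: invs_def)
  have inv3: "invs ns C P m (swp \<pi>') N' i' (xs' \<circ> sw)"
    using good_swp[OF g' N'(1)] m' N' by (auto simp: invs_def swp_apply)
  have ag: "\<forall>k l. l < N \<longrightarrow> \<pi>' (k,l) = swp \<pi> (k,l)" using r(2) by (simp add: stepok_def)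
  have swl: "sw l < N" if "l < N" for l using that N by (auto simp: sw_def)
  have sw0: "sw k = 0 \<longleftrightarrow> k = 1" and sw1: "sw k = 1 \<longleftrightarrow> k = 0" for k by (auto simp: sw_def)
  have swo: "swp p (k,l) = p (sw k, sw l)" if "\<not>(k = 0 \<and> l = 1)" "\<not>(k = 1 \<and> l = 0)" for p k l
    using that unfolding swp_apply by auto
  have agree: "swp \<pi>' (k,l) = \<pi> (k,l)" if lN: "l < N" for k l
  proof -
    consider "k = 0 \<and> l = 1" | "k = 1 \<and> l = 0" | "\<not>(k = 0 \<and> l = 1) \<and> \<not>(k = 1 \<and> l = 0)" by blast
    then show ?thesis
    proof cases
      case 1
      have "\<pi>' (0,1) = swp \<pi> (0,1)" using ag N by simp
      then show ?thesis using 1 by (simp add: swp_apply)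
    next
      case 2
      have "\<pi>' (1,0) = swp \<pi> (1,0)" using ag N by simp
      then show ?thesis using 2 by (simp add: swp_apply)
    next
      case 3
      have a: "swp \<pi>' (k,l) = \<pi>' (sw k, sw l)" using 3 swo by blast
      have b: "\<pi>' (sw k, sw l) = swp \<pi> (sw k, sw l)" using ag swl[OF lN] by blast
      have c: "\<not>(sw k = 0 \<and> sw l = 1)" "\<not>(sw k = 1 \<and> sw l = 0)" using 3 sw0 sw1 by auto
      have d: "swp \<pi> (sw k, sw l) = \<pi> (k,l)" using swo[OF c] by simp
      show ?thesis using a b d by simp
    qed
  qed
  have pre: "\<forall>j<N. restr ((xs' \<circ> sw) j) {..<ns i} = restr (xs j) {..<ns i}"
  proof (intro allI impI)
    fix j assume j: "j < N"
    have "restr (xs' (sw j)) {..<ns i} = restr ((xs \<circ> sw) (sw j)) {..<ns i}"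
      using r(2) swl[OF j] unfolding stepok_def by blast
    then show "restr ((xs' \<circ> sw) j) {..<ns i} = restr (xs j) {..<ns i}" by simp
  qed
  have prp: "ts 1 \<notin> F" if ts: "good ns C P (swp \<pi>') N' ts" "\<forall>j<N'. restr (ts j) {..<ns i'} = restr ((xs' \<circ> sw) j) {..<ns i'}" for ts
  proof -
    have "good ns C P (swp (swp \<pi>')) N' (ts \<circ> sw)" using good_swp[OF ts(1) N'(1)] m' by (simp add: swp_apply)
    then have a: "good ns C P \<pi>' N' (ts \<circ> sw)" by simp
    have swl': "sw j < N'" if "j < N'" for j using that N' by (auto simp: sw_def)
    have b: "\<forall>j<N'. restr ((ts \<circ> sw) j) {..<ns i'} = restr (xs' j) {..<ns i'}"
    proof (intro allI impI)
      fix j assume j: "j < N'"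
      have "restr (ts (sw j)) {..<ns i'} = restr ((xs' \<circ> sw) (sw j)) {..<ns i'}" using ts(2) swl'[OF j] by blast
      then show "restr ((ts \<circ> sw) j) {..<ns i'} = restr (xs' j) {..<ns i'}" by simp
    qed
    have "(ts \<circ> sw) 0 \<notin> F" using r(2) a b unfolding stepok_def by blast
    then show ?thesis by (simp add: sw_def)
  qed
  show ?thesis
    apply (rule exI[of _ "swp \<pi>'"], rule exI[of _ N'], rule exI[of _ i'], rule exI[of _ "xs' \<circ> sw"])
    using inv3 agree pre prp r(2) by (auto simp: stepok_def)
qed



lemma block_least:
  assumes sm: "strict_mono ns" and d: "d \<in> block ns b"
  shows "(LEAST b'. d < ns (Suc b')) = b"
proof (rule Least_equality)
  show "d < ns (Suc b)" using d by (simp add: block_def)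
  fix y assume y: "d < ns (Suc y)"
  show "b \<le> y"
  proof (rule ccontr)
    assume "\<not> b \<le> y"
    then have "ns (Suc y) \<le> ns b" using sm by (simp add: strict_mono_less_eq)
    then show False using d y by (simp add: block_def)
  qed
qed

lemma restr_fs: "restr x A \<in> fs A"
  by (simp add: restr_def fs_def)

lemma ext_core:
  assumes sm: "strict_mono ns" and Csub: "\<forall>i. C i \<subseteq> fs (block ns i)"
    and hyp: "\<forall>i s. (\<forall>k\<le>ns i. s k \<in> fs (block ns i)) \<longrightarrow>
           (\<exists>t. \<forall>k\<le>ns i. t \<in> (\<lambda>c. sadd c (s k)) ` C i) \<and>
           (\<exists>t. \<forall>k\<le>ns i. t \<in> (\<lambda>c. sadd c (s k)) ` (fs (block ns i) - C i))"
    and NN: "N \<le> ns i"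
    and pre: "\<forall>j<N. \<forall>b<i. restr (sadd a (E j)) (block ns b) \<in> C b"
  shows "\<exists>x. restr x {..<ns i} = restr a {..<ns i} \<and> (\<forall>j<N. sadd x (E j) \<in> Hset ns C)"
proof -
  define sb where "sb b = (\<lambda>k. restr (E (if k < N then k else 0)) (block ns b))" for b
  have ex: "\<exists>t. \<forall>k\<le>ns b. t \<in> (\<lambda>c. sadd c (sb b k)) ` C b" for b
  proof -
    have "\<forall>k\<le>ns b. sb b k \<in> fs (block ns b)" by (simp add: sb_def restr_fs)
    then show ?thesis using hyp by blast
  qed
  define t where "t b = (SOME t. \<forall>k\<le>ns b. t \<in> (\<lambda>c. sadd c (sb b k)) ` C b)" for b
  have t: "\<forall>k\<le>ns b. t b \<in> (\<lambda>c. sadd c (sb b k)) ` C b" for b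
    unfolding t_def using someI_ex[OF ex[of b]] .
  define blk where "blk d = (LEAST b'. d < ns (Suc b'))" for d
  define x where "x d = (if d < ns i then a d else t (blk d) d)" for d
  have xpre: "restr x {..<ns i} = restr a {..<ns i}" by (auto simp: restr_def x_def fun_eq_iff)
  have H: "sadd x (E j) \<in> Hset ns C" if j: "j < N" for j
    unfolding Hset_def
  proof (intro CollectI allI)
    fix b
    show "restr (sadd x (E j)) (block ns b) \<in> C b"
    proof (cases "b < i")
      case True
      have "block ns b \<subseteq> {..<ns i}" by (rule block_sub[OF sm True])
      then have "restr (sadd x (E j)) (block ns b) = restr (sadd a (E j)) (block ns b)"
        by (auto simp: restr_def sadd_def x_def fun_eq_iff)
      then show ?thesis using pre j True by simp
    next
      case False
      then have nb: "ns i \<le> ns b" using sm by (simp add: strict_mono_less_eq)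
      have "j \<le> ns b" using j NN nb by simp
      then obtain c where c: "c \<in> C b" "t b = sadd c (sb b j)" using t[of b] by blast
      have cfs: "c \<in> fs (block ns b)" using c(1) Csub by blast
      have "restr (sadd x (E j)) (block ns b) = c"
      proof (rule ext)
        fix d
        show "restr (sadd x (E j)) (block ns b) d = c d"
        proof (cases "d \<in> block ns b")
          case True
          then have "ns b \<le> d" by (simp add: block_def)
          then have "\<not> d < ns i" using nb by simp
          moreover have "blk d = b" using block_least[OF sm True] by (simp add: blk_def)
          ultimately show ?thesis using True c(2) j by (auto simp: restr_def sadd_def x_def sb_def)
        next
          case False
          then show ?thesis using cfs by (auto simp: restr_def fs_def)
        qed
      qed
      then show ?thesis using c(1) by simp
    qed
  qed
  show ?thesis using xpre H by blast
qed

lemma ext_tuple: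
  assumes sm: "strict_mono ns" and Csub: "\<forall>i. C i \<subseteq> fs (block ns i)"
    and hyp: "\<forall>i s. (\<forall>k\<le>ns i. s k \<in> fs (block ns i)) \<longrightarrow>
           (\<exists>t. \<forall>k\<le>ns i. t \<in> (\<lambda>c. sadd c (s k)) ` C i) \<and>
           (\<exists>t. \<forall>k\<le>ns i. t \<in> (\<lambda>c. sadd c (s k)) ` (fs (block ns i) - C i))"
    and g: "good ns C P \<pi> N ws" and NN: "N \<le> ns i" and w01: "ws 0 = ws 1"
    and sd: "1 \<in> Sd" "0 \<notin> Sd"
    and sides: "\<forall>k l mm. \<pi> (k,l) = Some mm \<longrightarrow> (k,l) \<noteq> (0,1) \<longrightarrow> (k \<in> Sd \<longleftrightarrow> l \<in> Sd)"
    and pm: "\<pi> (0,1) = Some m" and p: "p \<in> Pstar P m" and p0: "restr p {..<ns i} = (\<lambda>_. False)"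
  shows "\<exists>ts. good ns C P \<pi> N ts \<and> (\<forall>j. restr (ts j) {..<ns i} = restr (ws j) {..<ns i}) \<and> ts 1 = sadd (ts 0) p"
proof -
  have tm: "tree_mapping \<pi> N" using g by (simp add: good_def)
  have N2: "1 < N" using pm tm by (auto simp: tree_mapping_def)
  define E where "E j = sadd (sadd (ws 0) (ws j)) (if j \<in> Sd then p else (\<lambda>_. False))" for j
  have pz: "\<not> p d" if "d < ns i" for d
  proof -
    have "restr p {..<ns i} d = False" using p0 by simp
    then show ?thesis using that by (simp add: restr_def)
  qed
  have pre: "\<forall>j<N. \<forall>b<i. restr (sadd (ws 0) (E j)) (block ns b) \<in> C b"
  proof (intro allI impI)
    fix j b assume j: "j < N" and b: "b < i"
    have "block ns b \<subseteq> {..<ns i}" by (rule block_sub[OF sm b])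
    then have "restr (sadd (ws 0) (E j)) (block ns b) = restr (ws j) (block ns b)"
      using pz by (auto simp: restr_def sadd_def E_def fun_eq_iff)
    moreover have "ws j \<in> Hset ns C" using g j by (simp add: good_def)
    ultimately show "restr (sadd (ws 0) (E j)) (block ns b) \<in> C b" by (simp add: Hset_def)
  qed
  obtain x where x: "restr x {..<ns i} = restr (ws 0) {..<ns i}" "\<forall>j<N. sadd x (E j) \<in> Hset ns C"
    using ext_core[OF sm Csub hyp NN pre] by blast
  define ts where "ts j = (if j < N then sadd x (E j) else (\<lambda>_. False))" for j
  have xd: "x d = ws 0 d" if "d < ns i" for d
  proof -
    have "restr x {..<ns i} d = restr (ws 0) {..<ns i} d" using x(1) by simp
    then show ?thesis using that by (simp add: restr_def)
  qed
  have E: "in_Tstar P mm d (restr (sadd (ts k) (ts l)) {..<d})" if kl: "\<pi> (k,l) = Some mm" for k l mm d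
  proof -
    have kl2: "k < l" "l < N" using kl tm by (auto simp: tree_mapping_def)
    show ?thesis
    proof (cases "(k,l) = (0,1)")
      case True
      then have mm: "mm = m" using kl pm by simp
      have "sadd (ts k) (ts l) = p" using True N2 w01 sd by (auto simp: ts_def E_def sadd_def fun_eq_iff)
      then show ?thesis using p mm by (auto simp: in_Tstar_def)
    next
      case False
      then have "(k \<in> Sd \<longleftrightarrow> l \<in> Sd)" using sides kl by blast
      then have "sadd (ts k) (ts l) = sadd (ws k) (ws l)" using kl2 by (auto simp: ts_def E_def sadd_def fun_eq_iff)
      then show ?thesis using g kl by (simp add: good_def)
    qed
  qed
  have gts: "good ns C P \<pi> N ts" using tm x(2) E by (auto simp: good_def ts_def)
  have pres: "restr (ts j) {..<ns i} = restr (ws j) {..<ns i}" for j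
  proof (cases "j < N")
    case True then show ?thesis using xd pz by (auto simp: restr_def ts_def E_def sadd_def fun_eq_iff)
  next
    case False then show ?thesis using g by (auto simp: ts_def good_def)
  qed
  have "ts 1 = sadd (ts 0) p" using N2 w01 sd by (auto simp: ts_def E_def sadd_def fun_eq_iff)
  then show ?thesis using gts pres by blast
qed

lemma cyl_open: "openin cantor_top {v. \<forall>k<n. v k = u k}"
proof (induction n)
  case 0
  have "{v. \<forall>k<(0::nat). v k = u k} = topspace cantor_top" by (simp add: cantor_top_def)
  then show ?case by (simp only: openin_topspace)
next
  case (Suc n)
  have c: "continuous_map cantor_top (discrete_topology UNIV) (\<lambda>x. x n)"
    unfolding cantor_top_def by (rule continuous_map_product_projection) simp
  have o: "openin cantor_top {x \<in> topspace cantor_top. x n \<in> {u n}}"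
    by (rule openin_continuous_map_preimage[OF c]) simp
  have "{v. \<forall>k<Suc n. v k = u k} = {v. \<forall>k<n. v k = u k} \<inter> {x \<in> topspace cantor_top. x n \<in> {u n}}"
    by (auto simp: cantor_top_def less_Suc_eq)
  then show ?case using Suc o by (simp add: openin_Int)
qed

lemma perfect_split:
  assumes "perfect_in cantor_top S" "u \<in> S"
  shows "\<exists>v\<in>S. v \<noteq> u \<and> restr v {..<n} = restr u {..<n}"
proof -
  have "u \<in> cantor_top derived_set_of S" using assms by (simp add: perfect_in_def)
  then have A: "\<forall>T. u \<in> T \<and> openin cantor_top T \<longrightarrow> (\<exists>y. y \<noteq> u \<and> y \<in> S \<and> y \<in> T)"
    unfolding derived_set_of_def by simp
  have "u \<in> {v. \<forall>k<n. v k = u k} \<and> openin cantor_top {v. \<forall>k<n. v k = u k}" using cyl_open[of n u] by simp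
  then have "\<exists>y. y \<noteq> u \<and> y \<in> S \<and> y \<in> {v. \<forall>k<n. v k = u k}"
    by (rule mp[OF spec[OF A, of "{v. \<forall>k<n. v k = u k}"]])
  then show ?thesis by (auto simp: restr_def fun_eq_iff)
qed



lemma glue_root_U:
  assumes sm: "strict_mono ns" and S2: "(\<pi>2, N2, i2, s2) \<in> Sset ns C P"
    and t1: "tree_mapping \<pi> N" and t2: "tree_mapping \<pi>2 N2"
    and g: "good ns C P (glue \<pi> N \<pi>2 N2) (N + N2 - 1) ts"
    and pr: "\<forall>j<N + N2 - 1. restr (ts j) {..<ns i} = restr (gtup N xs zs j) {..<ns i}"
    and x0: "xs 0 = zs 0" and zs: "\<forall>j<N2. restr (zs j) {..<ns i2} = s2 j" and ii: "ns i2 \<le> ns i"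
  shows "ts 0 \<in> Uset ns C P (\<pi>2, N2, i2, s2)"
proof -
  have N1: "1 \<le> N" "1 \<le> N2" using t1 t2 by (auto simp: tree_mapping_def)
  have g2: "good ns C P \<pi>2 N2 (\<lambda>j. if j < N2 then ts (gemb N j) else (\<lambda>_. False))"
    using good_glue_split2[OF g t1 t2] .
  have p2: "\<forall>j<N2. restr ((\<lambda>j. if j < N2 then ts (gemb N j) else (\<lambda>_. False)) j) {..<ns i2} = s2 j"
  proof (intro allI impI)
    fix j assume j: "j < N2"
    then have "gemb N j < N + N2 - 1" using N1 gemb_less by simp
    then have "restr (ts (gemb N j)) {..<ns i2} = restr (gtup N xs zs (gemb N j)) {..<ns i2}" using pr restr_mono_eq ii by blast
    also have "gtup N xs zs (gemb N j) = zs j" using gtup_gemb[of xs zs N j] x0 N1 by simp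
    finally show "restr ((\<lambda>j. if j < N2 then ts (gemb N j) else (\<lambda>_. False)) j) {..<ns i2} = s2 j" using j zs by simp
  qed
  show ?thesis
    using g2 p2 N1 by (intro iffD2[OF U_char[OF sm S2]] exI[of _ "\<lambda>j. if j < N2 then ts (gemb N j) else (\<lambda>_. False)"]) (auto simp: gemb_def)
qed

lemma swap_back:
  assumes "good ns C P (swp \<pi>) N ts" "2 \<le> N" "\<pi> (0,1) \<noteq> None"
  shows "good ns C P \<pi> N (ts \<circ> sw)"
proof -
  have "swp \<pi> (0,1) \<noteq> None" using assms(3) by (simp add: swp_apply)
  then show ?thesis using good_swp[OF assms(1,2)] by simp
qed

lemma swap_pre:
  assumes "\<forall>j<N. restr (ts j) {..<a} = restr (ws (sw j)) {..<a}" "2 \<le> N"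
  shows "\<forall>j<N. restr ((ts \<circ> sw) j) {..<a} = restr (ws j) {..<a}"
proof (intro allI impI)
  fix j assume j: "j < N"
  then have "sw j < N" using assms(2) by (auto simp: sw_def)
  then show "restr ((ts \<circ> sw) j) {..<a} = restr (ws j) {..<a}" using assms(1) by fastforce
qed

definition piE :: "nat \<Rightarrow> (nat \<times> nat \<Rightarrow> nat option)" where
  "piE m = (\<lambda>(k,l). if k = 0 \<and> l = 1 then Some m else None)"

lemma tree_piE: "tree_mapping (piE m) 2"
  unfolding tree_mapping_alt piE_def by auto

lemma initial:
  assumes sm: "strict_mono ns" and Csub: "\<forall>i. C i \<subseteq> fs (block ns i)"
    and hyp: "\<forall>i s. (\<forall>k\<le>ns i. s k \<in> fs (block ns i)) \<longrightarrow>
           (\<exists>t. \<forall>k\<le>ns i. t \<in> (\<lambda>c. sadd c (s k)) ` C i) \<and>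
           (\<exists>t. \<forall>k\<le>ns i. t \<in> (\<lambda>c. sadd c (s k)) ` (fs (block ns i) - C i))"
    and Pm: "P m \<noteq> {}" and perf: "perfect_in cantor_top (P m)"
    and V: "openin (tau ns C P) V" and xV: "x \<in> V"
  shows "\<exists>\<pi> N i xs. invs ns C P m \<pi> N i xs \<and> restr (xs 0) {..<ns i} \<noteq> restr (xs 1) {..<ns i} \<and>
     (\<forall>ts. good ns C P \<pi> N ts \<and> (\<forall>j<N. restr (ts j) {..<ns i} = restr (xs j) {..<ns i}) \<longrightarrow> ts 0 \<in> V \<and> ts 1 \<in> V)"
proof -
  obtain \<sigma> where \<sigma>: "\<sigma> \<in> Sset ns C P" "x \<in> Uset ns C P \<sigma>" "Uset ns C P \<sigma> \<subseteq> V"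
    using basis_U[OF sm V] xV by blast
  obtain \<pi>2 N2 i2 s2 where e: "\<sigma> = (\<pi>2, N2, i2, s2)" by (cases \<sigma>) auto
  note S2 = \<sigma>(1)[unfolded e]
  obtain zs where zs: "zs 0 = x" "good ns C P \<pi>2 N2 zs" "\<forall>j<N2. restr (zs j) {..<ns i2} = s2 j"
    using iffD1[OF U_char[OF sm S2] \<sigma>(2)[unfolded e]] by blast
  have t2: "tree_mapping \<pi>2 N2" using zs(2) by (simp add: good_def)
  have N2: "1 \<le> N2" using t2 by (simp add: tree_mapping_def)
  have xH: "x \<in> Hset ns C" using zs N2 by (auto simp: good_def)
  obtain u where u: "u \<in> P m" using Pm by blast
  define xE where "xE = (\<lambda>j::nat. if j < 2 then x else (\<lambda>_::nat. False))"
  have gE: "good ns C P (piE m) 2 xE"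
  proof -
    have "in_Tstar P m d (restr (sadd x x) {..<d})" for d
    proof -
      have "sadd u u \<in> Pstar P m" using u by (auto simp: Pstar_def)
      moreover have "restr (sadd u u) {..<d} = restr (sadd x x) {..<d}" by (simp add: sadd_def restr_def)
      ultimately show ?thesis by (auto simp: in_Tstar_def)
    qed
    then show ?thesis using tree_piE xH by (auto simp: good_def xE_def piE_def split: if_splits)
  qed
  define N1 where "N1 = 2 + N2 - 1"
  define T1 where "T1 = glue (piE m) 2 \<pi>2 N2"
  define ws1 where "ws1 = gtup 2 xE zs"
  have g1: "good ns C P T1 N1 ws1" unfolding T1_def N1_def ws1_def
    using good_glue[OF gE zs(2)] zs(1) by (simp add: xE_def)
  have tT1: "tree_mapping T1 N1" using g1 by (simp add: good_def)
  have T1m: "T1 (0,1) = Some m" by (simp add: T1_def glue_apply piE_def)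
  have N1g: "2 \<le> N1" using N2 by (simp add: N1_def)
  have g1s: "good ns C P (swp T1) N1 (ws1 \<circ> sw)" using good_swp[OF g1 N1g] T1m by simp
  have tT1s: "tree_mapping (swp T1) N1" using g1s by (simp add: good_def)
  define N3 where "N3 = N1 + N2 - 1"
  define T2 where "T2 = glue (swp T1) N1 \<pi>2 N2"
  define ws2 where "ws2 = gtup N1 (ws1 \<circ> sw) zs"
  have w1: "ws1 0 = x" "ws1 1 = x" by (simp_all add: ws1_def gtup_def xE_def)
  have g2: "good ns C P T2 N3 ws2" unfolding T2_def N3_def ws2_def
    using good_glue[OF g1s zs(2)] zs(1) w1 by (simp add: sw_def)
  have T2m: "T2 (0,1) = Some m" using N1g T1m by (simp add: T2_def glue_apply swp_apply)
  have N3g: "2 \<le> N3" using N1g N2 by (simp add: N3_def)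
  define T3 where "T3 = swp T2"
  define ws3 where "ws3 = ws2 \<circ> sw"
  have g3: "good ns C P T3 N3 ws3" unfolding T3_def ws3_def using good_swp[OF g2 N3g] T2m by simp
  have T3m: "T3 (0,1) = Some m" using T2m by (simp add: T3_def swp_apply)
  have w3: "ws3 0 = ws3 1" using w1 N1g by (simp add: ws3_def ws2_def gtup_def sw_def)
  define i where "i = max i2 N3"
  have Ni: "N3 \<le> ns i" using ns_ge[OF sm, of i] by (simp add: i_def)
  have ii2: "ns i2 \<le> ns i" using sm by (simp add: i_def strict_mono_less_eq)
  define Sd where "Sd = {j. j = 1 \<or> N1 \<le> j}"
  have sides: "\<forall>k l mm. T3 (k,l) = Some mm \<longrightarrow> (k,l) \<noteq> (0,1) \<longrightarrow> (k \<in> Sd \<longleftrightarrow> l \<in> Sd)"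
  proof (intro allI impI)
    fix k l mm assume kl: "T3 (k,l) = Some mm" and n01: "(k,l) \<noteq> (0,1)"
    have tT3: "tree_mapping T3 N3" using g3 by (simp add: good_def)
    have klt: "k < l" "l < N3" using kl tT3 by (auto simp: tree_mapping_def)
    have T3e: "T3 (k,l) = T2 (sw k, sw l)" using n01 klt by (auto simp: T3_def swp_apply)
    show "k \<in> Sd \<longleftrightarrow> l \<in> Sd"
    proof (cases "N1 \<le> l")
      case True
      then have swl: "sw l = l" using N1g by (auto simp: sw_def)
      have "T2 (sw k, l) \<noteq> None" using kl T3e swl by simp
      then have "sw k = 0 \<or> N1 \<le> sw k" using True by (auto simp: T2_def glue_apply split: if_splits)
      then have "k = 1 \<or> N1 \<le> k" using N1g by (auto simp: sw_def split: if_splits)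
      then show ?thesis using True by (auto simp: Sd_def)
    next
      case False
      have swl: "sw l < N1" using False N1g by (auto simp: sw_def)
      have c: "\<not>(sw k = 0 \<and> sw l = 1)" "\<not>(sw k = 1 \<and> sw l = 0)" using n01 klt by (auto simp: sw_def split: if_splits)
      have "T2 (sw k, sw l) = swp T1 (sw k, sw l)" using swl by (simp add: T2_def glue_apply)
      also have "\<dots> = T1 (k,l)" using c by (auto simp: swp_apply)
      finally have "T1 (k,l) \<noteq> None" using kl T3e by simp
      then have "2 \<le> l \<and> (k = 0 \<or> 2 \<le> k)" using n01 by (auto simp: T1_def glue_apply piE_def split: if_splits)
      then show ?thesis using False klt by (auto simp: Sd_def)
    qed
  qed
  obtain v where v: "v \<in> P m" "v \<noteq> u" "restr v {..<ns i} = restr u {..<ns i}" using perfect_split[OF perf u] by blast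
  define p where "p = sadd u v"
  have p: "p \<in> Pstar P m" using u v by (auto simp: Pstar_def p_def)
  have p0: "restr p {..<ns i} = (\<lambda>_. False)"
  proof
    fix d show "restr p {..<ns i} d = False"
    proof (cases "d < ns i")
      case True
      have "restr v {..<ns i} d = restr u {..<ns i} d" using v(3) by simp
      then show ?thesis using True by (simp add: restr_def p_def sadd_def)
    qed (simp add: restr_def)
  qed
  obtain d where pd: "p d" using v(2) by (auto simp: p_def sadd_def fun_eq_iff)
  have sd: "1 \<in> Sd" "0 \<notin> Sd" using N1g by (auto simp: Sd_def)
  obtain ts where ts: "good ns C P T3 N3 ts" "\<forall>j. restr (ts j) {..<ns i} = restr (ws3 j) {..<ns i}" "ts 1 = sadd (ts 0) p"
    using ext_tuple[OF sm Csub hyp g3 Ni w3 sd sides T3m p p0] by blast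
  define i0 where "i0 = max i (Suc d)"
  have ii0: "ns i \<le> ns i0" using sm by (simp add: i0_def strict_mono_less_eq)
  have Ni0: "N3 \<le> ns i0" using Ni ii0 by simp
  have dl: "d < ns i0" using ns_ge[OF sm, of i0] by (simp add: i0_def)
  have inv: "invs ns C P m T3 N3 i0 ts" using ts(1) N3g Ni0 T3m by (simp add: invs_def)
  have diff: "restr (ts 0) {..<ns i0} \<noteq> restr (ts 1) {..<ns i0}"
  proof
    assume "restr (ts 0) {..<ns i0} = restr (ts 1) {..<ns i0}"
    then have "restr (ts 0) {..<ns i0} d = restr (ts 1) {..<ns i0} d" by simp
    then show False using dl ts(3) pd by (simp add: restr_def sadd_def)
  qed
  have prp: "tss 0 \<in> V \<and> tss 1 \<in> V" if tss: "good ns C P T3 N3 tss" "\<forall>j<N3. restr (tss j) {..<ns i0} = restr (ts j) {..<ns i0}" for tss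
  proof -
    have pre3: "\<forall>j<N3. restr (tss j) {..<ns i} = restr (ws2 (sw j)) {..<ns i}"
    proof (intro allI impI)
      fix j assume j: "j < N3"
      have "restr (tss j) {..<ns i} = restr (ts j) {..<ns i}" using tss(2) j restr_mono_eq ii0 by blast
      then show "restr (tss j) {..<ns i} = restr (ws2 (sw j)) {..<ns i}" using ts(2) by (simp add: ws3_def)
    qed
    define tss1 where "tss1 = tss \<circ> sw"
    have gt1: "good ns C P T2 N3 tss1" unfolding tss1_def using swap_back[of ns C P T2 N3 tss] tss(1) N3g T2m by (simp add: T3_def)
    have pt1: "\<forall>j<N3. restr (tss1 j) {..<ns i} = restr (ws2 j) {..<ns i}" unfolding tss1_def by (rule swap_pre[OF pre3 N3g])
    have A: "tss1 0 \<in> Uset ns C P (\<pi>2, N2, i2, s2)"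
      apply (rule glue_root_U[OF sm S2 tT1s t2, where ts=tss1 and i=i and xs="ws1 \<circ> sw" and zs=zs])
      using gt1 pt1 zs w1 ii2 by (simp_all add: T2_def N3_def ws2_def sw_def)
    define t1 where "t1 = (\<lambda>j. if j < N1 then tss1 j else (\<lambda>_. False))"
    have gt1': "good ns C P (swp T1) N1 t1" unfolding t1_def
      using good_glue_split1[of ns C P "swp T1" N1 \<pi>2 N2 tss1] gt1 tT1s t2 by (simp add: T2_def N3_def)
    have pt1': "\<forall>j<N1. restr (t1 j) {..<ns i} = restr ((ws1 \<circ> sw) j) {..<ns i}"
    proof (intro allI impI)
      fix j assume j: "j < N1"
      then have "j < N3" using N2 by (simp add: N3_def)
      then show "restr (t1 j) {..<ns i} = restr ((ws1 \<circ> sw) j) {..<ns i}"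
        using pt1 j by (simp add: t1_def ws2_def gtup_def)
    qed
    have gt2: "good ns C P T1 N1 (t1 \<circ> sw)" using swap_back[OF gt1' N1g] T1m by simp
    have pre1: "\<forall>j<N1. restr (t1 j) {..<ns i} = restr (ws1 (sw j)) {..<ns i}" using pt1' by simp
    have pt2: "\<forall>j<N1. restr ((t1 \<circ> sw) j) {..<ns i} = restr (ws1 j) {..<ns i}" by (rule swap_pre[OF pre1 N1g])
    have B: "(t1 \<circ> sw) 0 \<in> Uset ns C P (\<pi>2, N2, i2, s2)"
      apply (rule glue_root_U[OF sm S2 tree_piE t2, where ts="t1 \<circ> sw" and i=i and xs=xE and zs=zs])
      using gt2 pt2 zs ii2 by (simp_all add: T1_def N1_def ws1_def xE_def)
    have "(t1 \<circ> sw) 0 = tss 0" using N1g by (simp add: t1_def tss1_def sw_def)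
    moreover have "tss1 0 = tss 1" by (simp add: tss1_def sw_def)
    ultimately show ?thesis using A B \<sigma>(3) e by auto
  qed
  show ?thesis
    apply (rule exI[of _ T3], rule exI[of _ N3], rule exI[of _ i0], rule exI[of _ ts])
    using inv diff prp by blast
qed



lemma cantor_topspace: "topspace cantor_top = UNIV"
  by (simp add: cantor_top_def)

lemma Pstar_closed:
  assumes perf: "perfect_in cantor_top (P m)"
    and x: "\<forall>d. in_Tstar P m d (restr x {..<d})"
  shows "x \<in> Pstar P m"
proof -
  have cl: "closedin cantor_top (P m)"
    using perf by (simp add: closedin_contains_derived_set perfect_in_def cantor_topspace)
  have cs: "compact_space cantor_top"
    unfolding cantor_top_def by (simp add: compact_space_product_topology compact_space_discrete_topology)
  have cP: "compactin cantor_top (P m)" by (rule closedin_compact_space[OF cs cl])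
  have cPP: "compactin (prod_topology cantor_top cantor_top) (P m \<times> P m)"
    using cP by (simp add: compactin_Times)
  have cont: "continuous_map (prod_topology cantor_top cantor_top) cantor_top (\<lambda>z. sadd (fst z) (snd z))"
    unfolding cantor_top_def continuous_map_componentwise_UNIV
  proof
    fix k
    let ?X = "product_topology (\<lambda>_. discrete_topology (UNIV::bool set)) (UNIV::nat set)"
    have h1: "continuous_map (prod_topology ?X ?X) (discrete_topology UNIV) (\<lambda>x. fst x k)"
      using continuous_map_compose[OF continuous_map_fst continuous_map_product_projection[of k UNIV "\<lambda>_. discrete_topology (UNIV::bool set)"]]
      by (simp add: o_def)
    have h2: "continuous_map (prod_topology ?X ?X) (discrete_topology UNIV) (\<lambda>x. snd x k)"
      using continuous_map_compose[OF continuous_map_snd continuous_map_product_projection[of k UNIV "\<lambda>_. discrete_topology (UNIV::bool set)"]]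
      by (simp add: o_def)
    have h: "continuous_map (prod_topology ?X ?X) (prod_topology (discrete_topology (UNIV::bool set)) (discrete_topology (UNIV::bool set))) (\<lambda>z. (fst z k, snd z k))"
      using h1 h2 by (simp add: continuous_map_pairwise o_def)
    have g: "continuous_map (prod_topology (discrete_topology (UNIV::bool set)) (discrete_topology (UNIV::bool set))) (discrete_topology UNIV) (\<lambda>(a::bool,b::bool). a \<noteq> b)"
      unfolding prod_topology_discrete_topology[symmetric] by simp
    have "continuous_map (prod_topology ?X ?X) (discrete_topology UNIV) ((\<lambda>(a::bool,b::bool). a \<noteq> b) \<circ> (\<lambda>z. (fst z k, snd z k)))"
      by (rule continuous_map_compose[OF h g])
    then show "continuous_map (prod_topology ?X ?X) (discrete_topology UNIV) (\<lambda>z. sadd (fst z) (snd z) k)"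
      by (simp add: o_def sadd_def)
  qed
  have eq: "Pstar P m = (\<lambda>z. sadd (fst z) (snd z)) ` (P m \<times> P m)"
    by (auto simp: Pstar_def image_def)
  have cS: "compactin cantor_top (Pstar P m)" unfolding eq by (rule image_compactin[OF cPP cont])
  have hs: "Hausdorff_space cantor_top"
    unfolding cantor_top_def by (simp add: Hausdorff_space_product_topology)
  have clS: "closedin cantor_top (Pstar P m)" by (rule compactin_imp_closedin[OF hs cS])
  show ?thesis
  proof (rule ccontr)
    assume nx: "x \<notin> Pstar P m"
    have op: "openin cantor_top (UNIV - Pstar P m)"
      using clS by (simp add: closedin_def cantor_topspace)
    then have "\<forall>z\<in>UNIV - Pstar P m. \<exists>U. finite {i \<in> UNIV. U i \<noteq> topspace (discrete_topology (UNIV::bool set))} \<and>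
                 (\<forall>i \<in> UNIV. openin (discrete_topology UNIV) (U i)) \<and> z \<in> Pi\<^sub>E UNIV U \<and> Pi\<^sub>E UNIV U \<subseteq> UNIV - Pstar P m"
      unfolding cantor_top_def openin_product_topology_alt by simp
    then have "\<exists>U. finite {i \<in> UNIV. U i \<noteq> topspace (discrete_topology (UNIV::bool set))} \<and>
                 (\<forall>i \<in> UNIV. openin (discrete_topology UNIV) (U i)) \<and> x \<in> Pi\<^sub>E UNIV U \<and> Pi\<^sub>E UNIV U \<subseteq> UNIV - Pstar P m"
      using nx by simp
    then obtain U where U: "finite {i \<in> UNIV. U i \<noteq> topspace (discrete_topology (UNIV::bool set))}"
      "x \<in> Pi\<^sub>E UNIV U" "Pi\<^sub>E UNIV U \<subseteq> UNIV - Pstar P m"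
      by (elim exE conjE) simp
    obtain d where d: "{i \<in> UNIV. U i \<noteq> topspace (discrete_topology (UNIV::bool set))} \<subseteq> {..<d}"
      using finite_nat_bounded[OF U(1)] by (elim exE) simp
    have "in_Tstar P m d (restr x {..<d})" using x by simp
    then obtain y where y: "y \<in> Pstar P m" "restr y {..<d} = restr x {..<d}"
      unfolding in_Tstar_def by (elim bexE) simp
    have yk: "y k \<in> U k" for k
    proof (cases "U k = UNIV")
      case True then show ?thesis by simp
    next
      case False
      then have "k < d" using d by auto
      moreover have "restr y {..<d} k = restr x {..<d} k" using y(2) by simp
      ultimately have "y k = x k" by (simp add: restr_def)
      moreover have "x k \<in> U k" using U(2) by (simp add: PiE_iff)
      ultimately show ?thesis by simp
    qed
    have "y \<in> Pi\<^sub>E UNIV U" using yk by (simp add: PiE_iff)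
    then show False using U(3) y(1) by blast
  qed
qed



lemma main:
  fixes ns :: "nat \<Rightarrow> nat" and C :: "nat \<Rightarrow> (nat \<Rightarrow> bool) set"
    and P :: "nat \<Rightarrow> (nat \<Rightarrow> bool) set" and B :: "(nat \<Rightarrow> bool) set" and m :: nat
  assumes sm: "strict_mono ns"
    and Csub: "\<forall>i. C i \<subseteq> fs (block ns i)"
    and hyp: "\<forall>i s. (\<forall>k\<le>ns i. s k \<in> fs (block ns i)) \<longrightarrow>
           (\<exists>t. \<forall>k\<le>ns i. t \<in> (\<lambda>c. sadd c (s k)) ` C i) \<and>
           (\<exists>t. \<forall>k\<le>ns i. t \<in> (\<lambda>c. sadd c (s k)) ` (fs (block ns i) - C i))"
    and Pp: "\<forall>j. P j \<noteq> {} \<and> perfect_in cantor_top (P j)"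
    and nm: "\<not> meager_in (tau ns C P) B"
    and bp: "baire_property_in (tau ns C P) B"
  shows "\<exists>x\<in>P m. \<exists>y\<in>P m. x \<noteq> y \<and> translate B x \<inter> translate B y \<noteq> {}"
proof -
  let ?T = "tau ns C P"
  obtain V where V: "openin ?T V" "meager_in ?T ((B - V) \<union> (V - B))"
    using bp by (auto simp: baire_property_in_def)
  obtain F where F: "countable F" "\<forall>N\<in>F. nowhere_dense_in ?T N" "(B - V) \<union> (V - B) \<subseteq> \<Union>F"
    using V(2) by (auto simp: meager_in_def)
  have "V \<noteq> {}"
  proof
    assume "V = {}"
    then have "meager_in ?T B" using F unfolding meager_in_def by (intro exI[of _ F]) auto
    then show False using nm by simp
  qed
  then obtain x where xV: "x \<in> V" by blast
  define Fn where "Fn n = (if F = {} then {} else from_nat_into F n)" for n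
  have ndF: "nowhere_dense_in ?T (Fn n)" for n
  proof (cases "F = {}")
    case True then show ?thesis by (simp add: Fn_def nowhere_dense_in_def)
  next
    case False then show ?thesis using F(2) from_nat_into[OF False] by (simp add: Fn_def)
  qed
  have cov: "\<Union>F \<subseteq> (\<Union>n. Fn n)"
  proof
    fix z assume "z \<in> \<Union>F"
    then obtain N where N: "N \<in> F" "z \<in> N" by blast
    then obtain n where "from_nat_into F n = N" using from_nat_into_surj[OF F(1)] by blast
    then show "z \<in> (\<Union>n. Fn n)" using N by (auto simp: Fn_def)
  qed
  have Pm: "P m \<noteq> {}" "perfect_in cantor_top (P m)" using Pp by auto
  obtain \<pi>0 N0 i0 xs0 where I: "invs ns C P m \<pi>0 N0 i0 xs0" "restr (xs0 0) {..<ns i0} \<noteq> restr (xs0 1) {..<ns i0}"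
    "\<forall>ts. good ns C P \<pi>0 N0 ts \<and> (\<forall>j<N0. restr (ts j) {..<ns i0} = restr (xs0 j) {..<ns i0}) \<longrightarrow> ts 0 \<in> V \<and> ts 1 \<in> V"
    using initial[OF sm Csub hyp Pm V(1) xV] by blast
  define PP where "PP n st = ((case st of (\<pi>, N, i, xs) \<Rightarrow> invs ns C P m \<pi> N i xs) \<and> (n = 0 \<longrightarrow> st = (\<pi>0, N0, i0, xs0)))"
    for n :: nat and st :: "(nat \<times> nat \<Rightarrow> nat option) \<times> nat \<times> nat \<times> (nat \<Rightarrow> nat \<Rightarrow> bool)"
  define QQ where "QQ n st st' = (case st of (\<pi>, N, i, xs) \<Rightarrow> case st' of (\<pi>', N', i', xs') \<Rightarrow>
      stepok ns C P \<pi> N i xs \<pi>' N' i' xs' (n mod 2) (Fn (n div 2)))"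
    for n :: nat and st st' :: "(nat \<times> nat \<Rightarrow> nat option) \<times> nat \<times> nat \<times> (nat \<Rightarrow> nat \<Rightarrow> bool)"
  have P0: "\<exists>st. PP 0 st" using I(1) by (intro exI[of _ "(\<pi>0, N0, i0, xs0)"]) (simp add: PP_def)
  have PS: "\<exists>st'. PP (Suc n) st' \<and> QQ n st st'" if "PP n st" for n :: nat and st
  proof -
    obtain \<pi> N i xs where e: "st = (\<pi>, N, i, xs)" by (cases st) auto
    have inv: "invs ns C P m \<pi> N i xs" using that e by (simp add: PP_def)
    have "\<exists>\<pi>' N' i' xs'. invs ns C P m \<pi>' N' i' xs' \<and> stepok ns C P \<pi> N i xs \<pi>' N' i' xs' (n mod 2) (Fn (n div 2))"
    proof (cases "n mod 2 = 0")
      case True then show ?thesis using step0[OF sm inv ndF] by simp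
    next
      case False then have "n mod 2 = 1" by simp
      then show ?thesis using step1[OF sm inv ndF] by simp
    qed
    then obtain \<pi>' N' i' xs' where "invs ns C P m \<pi>' N' i' xs'" "stepok ns C P \<pi> N i xs \<pi>' N' i' xs' (n mod 2) (Fn (n div 2))"
      by blast
    then show ?thesis using e by (intro exI[of _ "(\<pi>', N', i', xs')"]) (simp add: PP_def QQ_def)
  qed
  obtain f where f: "\<forall>n. PP n (f n) \<and> QQ n (f n) (f (Suc n))"
    using dependent_nat_choice[of PP QQ, OF P0 PS] by blast
  define \<pi>s where "\<pi>s k = fst (f k)" for k
  define Ns where "Ns k = fst (snd (f k))" for k
  define iss where "iss k = fst (snd (snd (f k)))" for k
  define xss where "xss k = snd (snd (snd (f k)))" for k
  have fe: "f k = (\<pi>s k, Ns k, iss k, xss k)" for k by (simp add: \<pi>s_def Ns_def iss_def xss_def)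
  have inv: "invs ns C P m (\<pi>s k) (Ns k) (iss k) (xss k)" for k
  proof -
    have "PP k (f k)" using f by blast
    then show ?thesis unfolding fe[of k] PP_def by simp
  qed
  have f0: "\<pi>s 0 = \<pi>0" "Ns 0 = N0" "iss 0 = i0" "xss 0 = xs0"
  proof -
    have "PP 0 (f 0)" using f by blast
    then have "f 0 = (\<pi>0, N0, i0, xs0)" unfolding PP_def by simp
    then show "\<pi>s 0 = \<pi>0" "Ns 0 = N0" "iss 0 = i0" "xss 0 = xs0" unfolding fe[of 0] by simp_all
  qed
  have st: "stepok ns C P (\<pi>s k) (Ns k) (iss k) (xss k) (\<pi>s (Suc k)) (Ns (Suc k)) (iss (Suc k)) (xss (Suc k)) (k mod 2) (Fn (k div 2))" for k
  proof -
    have "QQ k (f k) (f (Suc k))" using f by blast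
    then show ?thesis unfolding fe[of k] fe[of "Suc k"] QQ_def by simp
  qed
  have gk: "good ns C P (\<pi>s k) (Ns k) (xss k)" and N2k: "2 \<le> Ns k" for k using inv[of k] by (auto simp: invs_def)
  have C1: "Ns k \<le> Ns k'" if "k \<le> k'" for k k'
    using that by (induction k' rule: dec_induct) (use st in \<open>auto simp: stepok_def intro: order_trans\<close>)
  have C2: "k + iss 0 \<le> iss k" for k
  proof (induction k)
    case (Suc k) then show ?case using st[of k] by (simp add: stepok_def)
  qed simp
  have isuc: "iss n \<le> iss (Suc n)" for n using st[of n] by (simp add: stepok_def)
  have C2': "iss k \<le> iss k'" if "k \<le> k'" for k k'
    using that by (induction k' rule: dec_induct) (use isuc in \<open>auto intro: order_trans\<close>)
  have C3: "\<forall>a b. b < Ns k \<longrightarrow> \<pi>s k' (a,b) = \<pi>s k (a,b)" if "k \<le> k'" for k k'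
    using that
  proof (induction k' rule: dec_induct)
    case base then show ?case by simp
  next
    case (step n)
    have "Ns k \<le> Ns n" using C1 step(1) by simp
    then show ?case using step(3) st[of n] by (auto simp: stepok_def)
  qed
  have C4: "\<forall>j<Ns k. restr (xss k' j) {..<ns (iss k)} = restr (xss k j) {..<ns (iss k)}" if "k \<le> k'" for k k'
    using that
  proof (induction k' rule: dec_induct)
    case base then show ?case by simp
  next
    case (step n)
    show ?case
    proof (intro allI impI)
      fix j assume j: "j < Ns k"
      have jn: "j < Ns n" using C1[OF step(1)] j by simp
      have "restr (xss (Suc n) j) {..<ns (iss n)} = restr (xss n j) {..<ns (iss n)}" using st[of n] jn by (simp add: stepok_def)
      moreover have "ns (iss k) \<le> ns (iss n)" using C2'[OF step(1)] sm by (simp add: strict_mono_less_eq)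
      ultimately have "restr (xss (Suc n) j) {..<ns (iss k)} = restr (xss n j) {..<ns (iss k)}" by (rule restr_mono_eq)
      then show "restr (xss (Suc n) j) {..<ns (iss k)} = restr (xss k j) {..<ns (iss k)}" using step(3) j by simp
    qed
  qed
  have isk: "k < ns (iss (Suc k))" for k
  proof -
    have "Suc k \<le> iss (Suc k)" using C2[of "Suc k"] by simp
    then show ?thesis using ns_ge[OF sm, of "iss (Suc k)"] by simp
  qed
  define Y where "Y j d = (if \<exists>k. j < Ns k then xss ((LEAST k. j < Ns k) + Suc d) j d else False)" for j d
  have key: "Y j d = xss k j d" if jk: "j < Ns k" and dk: "d < ns (iss k)" for j k d
  proof -
    define k0 where "k0 = (LEAST k. j < Ns k)"
    have k0: "j < Ns k0" "k0 \<le> k" using LeastI[of "\<lambda>k. j < Ns k", OF jk] Least_le[of "\<lambda>k. j < Ns k", OF jk] by (simp_all add: k0_def)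
    define k1 where "k1 = k0 + Suc d"
    have Yk1: "Y j d = xss k1 j d" using jk by (auto simp: Y_def k1_def k0_def)
    have j1: "j < Ns k1" using k0(1) C1[of k0 k1] by (simp add: k1_def)
    have d1: "d < ns (iss k1)"
    proof -
      have "k0 + d < ns (iss (Suc (k0 + d)))" by (rule isk)
      then show ?thesis by (simp add: k1_def)
    qed
    show ?thesis
    proof (cases "k \<le> k1")
      case True
      have "restr (xss k1 j) {..<ns (iss k)} = restr (xss k j) {..<ns (iss k)}" using C4[OF True] jk by blast
      then have "restr (xss k1 j) {..<ns (iss k)} d = restr (xss k j) {..<ns (iss k)} d" by simp
      then show ?thesis using Yk1 dk by (simp add: restr_def)
    next
      case False
      then have "k1 \<le> k" by simp
      then have "restr (xss k j) {..<ns (iss k1)} = restr (xss k1 j) {..<ns (iss k1)}" using C4 j1 by blast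
      then have "restr (xss k j) {..<ns (iss k1)} d = restr (xss k1 j) {..<ns (iss k1)} d" by simp
      then show ?thesis using Yk1 d1 by (simp add: restr_def)
    qed
  qed
  define Yk where "Yk k = (\<lambda>j. if j < Ns k then Y j else (\<lambda>_. False))" for k
  have goodY: "good ns C P (\<pi>s k) (Ns k) (Yk k)" for k
  proof -
    have tm: "tree_mapping (\<pi>s k) (Ns k)" using gk[of k] by (simp add: good_def)
    have H: "Y j \<in> Hset ns C" if j: "j < Ns k" for j
      unfolding Hset_def
    proof (intro CollectI allI)
      fix b
      define k' where "k' = k + Suc b"
      have j': "j < Ns k'" using C1[of k k'] j by (simp add: k'_def)
      have "Suc b \<le> iss k'" using C2[of k'] by (simp add: k'_def)
      then have bb: "ns (Suc b) \<le> ns (iss k')" using sm by (simp add: strict_mono_less_eq)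
      have "restr (Y j) (block ns b) = restr (xss k' j) (block ns b)"
      proof
        fix e show "restr (Y j) (block ns b) e = restr (xss k' j) (block ns b) e"
        proof (cases "e \<in> block ns b")
          case True
          then have "e < ns (iss k')" using bb by (simp add: block_def)
          then show ?thesis using key[OF j'] True by (simp add: restr_def)
        qed (simp add: restr_def)
      qed
      moreover have "xss k' j \<in> Hset ns C" using gk[of k'] j' by (simp add: good_def)
      ultimately show "restr (Y j) (block ns b) \<in> C b" by (simp add: Hset_def)
    qed
    have E: "in_Tstar P mm d (restr (sadd (Yk k a) (Yk k b)) {..<d})" if ab: "\<pi>s k (a,b) = Some mm" for a b mm d
    proof -
      have abN: "a < b" "b < Ns k" using ab tm by (auto simp: tree_mapping_def)
      define k' where "k' = k + Suc d"
      have kk: "k \<le> k'" by (simp add: k'_def)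
      have ab': "\<pi>s k' (a,b) = Some mm" using C3[OF kk] abN ab by simp
      have Nk': "Ns k \<le> Ns k'" using C1[OF kk] .
      have dd: "d \<le> ns (iss k')"
      proof -
        have "Suc d \<le> iss k'" using C2[of k'] by (simp add: k'_def)
        then show ?thesis using ns_ge[OF sm, of "iss k'"] by simp
      qed
      have "restr (sadd (Yk k a) (Yk k b)) {..<d} = restr (sadd (xss k' a) (xss k' b)) {..<d}"
      proof
        fix e show "restr (sadd (Yk k a) (Yk k b)) {..<d} e = restr (sadd (xss k' a) (xss k' b)) {..<d} e"
        proof (cases "e < d")
          case True
          then have "e < ns (iss k')" using dd by simp
          then have "Y a e = xss k' a e" "Y b e = xss k' b e" using key abN Nk' by auto
          then show ?thesis using abN True by (simp add: restr_def sadd_def Yk_def)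
        qed (simp add: restr_def)
      qed
      moreover have "in_Tstar P mm d (restr (sadd (xss k' a) (xss k' b)) {..<d})" using gk[of k'] ab' by (simp add: good_def)
      ultimately show ?thesis by simp
    qed
    show ?thesis using tm H E by (auto simp: good_def Yk_def)
  qed
  have preY: "\<forall>j<Ns k. restr (Yk k j) {..<ns (iss k)} = restr (xss k j) {..<ns (iss k)}" for k
  proof (intro allI impI)
    fix j assume j: "j < Ns k"
    show "restr (Yk k j) {..<ns (iss k)} = restr (xss k j) {..<ns (iss k)}"
    proof
      fix e show "restr (Yk k j) {..<ns (iss k)} e = restr (xss k j) {..<ns (iss k)} e"
        using key[OF j] j by (simp add: restr_def Yk_def)
    qed
  qed
  have Yk01: "Yk k 0 = Y 0" "Yk k 1 = Y 1" for k using N2k[of k] by (simp_all add: Yk_def)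
  have notF: "Yk (Suc k) (k mod 2) \<notin> Fn (k div 2)" for k
    using st[of k] goodY[of "Suc k"] preY[of "Suc k"] unfolding stepok_def by blast
  have Y0F: "Y 0 \<notin> Fn n" for n using notF[of "2*n"] Yk01 by simp
  have Y1F: "Y 1 \<notin> Fn n" for n using notF[of "2*n+1"] Yk01 by simp
  have YV: "Y 0 \<in> V \<and> Y 1 \<in> V" using I(3) goodY[of 0] preY[of 0] f0 Yk01[of 0] by metis
  have Yne: "Y 0 \<noteq> Y 1"
  proof
    assume "Y 0 = Y 1"
    then have "restr (Yk 0 0) {..<ns (iss 0)} = restr (Yk 0 1) {..<ns (iss 0)}" using Yk01 by simp
    then show False using preY[of 0] N2k[of 0] I(2) f0 by auto
  qed
  have m0: "\<pi>s 0 (0,1) = Some m" using inv[of 0] by (simp add: invs_def)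
  have "in_Tstar P m d (restr (sadd (Y 0) (Y 1)) {..<d})" for d
    using goodY[of 0] m0 Yk01[of 0] unfolding good_def by metis
  then have YP: "sadd (Y 0) (Y 1) \<in> Pstar P m" using Pstar_closed[of P m, OF Pm(2)] by blast
  have YB: "Y 0 \<in> B" "Y 1 \<in> B" using YV Y0F Y1F F(3) cov by blast+
  obtain u v where uv: "u \<in> P m" "v \<in> P m" "sadd (Y 0) (Y 1) = sadd u v" using YP by (auto simp: Pstar_def)
  have "u \<noteq> v"
  proof
    assume "u = v"
    then have "sadd (Y 0) (Y 1) = (\<lambda>_. False)" using uv(3) by (simp add: sadd_def)
    then show False using Yne by (auto simp: sadd_def fun_eq_iff)
  qed
  moreover have "sadd (Y 0) u = sadd (Y 1) v"
  proof
    fix e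
    have "(Y 0 e \<noteq> Y 1 e) = (u e \<noteq> v e)" using uv(3) by (simp add: sadd_def fun_eq_iff)
    then show "sadd (Y 0) u e = sadd (Y 1) v e" by (auto simp: sadd_def)
  qed
  then have "sadd (Y 0) u \<in> translate B u \<inter> translate B v"
  proof -
    assume eq: "sadd (Y 0) u = sadd (Y 1) v"
    have "sadd (Y 0) u \<in> translate B u" using YB(1) by (simp add: translate_def)
    moreover have "sadd (Y 1) v \<in> translate B v" using YB(2) by (simp add: translate_def)
    ultimately show ?thesis using eq by simp
  qed
  ultimately show ?thesis using uv by blast
qed


theorem proposition2p7:
  fixes ns :: "nat \<Rightarrow> nat" and C :: "nat \<Rightarrow> (nat \<Rightarrow> bool) set"
    and P :: "nat \<Rightarrow> (nat \<Rightarrow> bool) set" and B :: "(nat \<Rightarrow> bool) set" and m :: nat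
  assumes "ns 0 = 0" and "strict_mono ns"
    and "\<forall>i. C i \<subseteq> fs (block ns i)"
    and "\<forall>i s. (\<forall>k\<le>ns i. s k \<in> fs (block ns i)) \<longrightarrow>
           (\<exists>t. \<forall>k\<le>ns i. t \<in> (\<lambda>c. sadd c (s k)) ` C i) \<and>
           (\<exists>t. \<forall>k\<le>ns i. t \<in> (\<lambda>c. sadd c (s k)) ` (fs (block ns i) - C i))"
    and "\<forall>j. P j \<noteq> {} \<and> perfect_in cantor_top (P j)"
    and "B \<subseteq> Hset ns C"
    and "\<not> meager_in (tau ns C P) B"
    and "baire_property_in (tau ns C P) B"
  shows "\<exists>x\<in>P m. \<exists>y\<in>P m. x \<noteq> y \<and> translate B x \<inter> translate B y \<noteq> {}"
    using main[OF assms(2,3,4,5,7,8)] .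

end
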